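(* Let $\Gamma$ be a homogeneous rooted metric tree with root $o$, edge length $1$ and branching number $b\geq 2$, and let $$\lambda_b := \left(\arccos \frac{1}{R_b}\right)^2,\qquad R_b:=\frac{b^{1/2}+b^{-1/2}}{2}.$$ Let $\psi$ be a measurable, non-negative function on $\mathbb{R}_+$. Then there exists a constant $C(b,\psi)<\infty$ such that $$\int_{\Gamma} \psi(|x|)\, |u(x)|^2 \, dx \leq C(b,\psi) \int_{\Gamma} \left( |u'(x)|^2 - \lambda_b |u(x)|^2\right) dx \quad\text{for all } u \in C_0^\infty(\Gamma_o)$$ if and only if $$\sup_{r>0}\, (1 + r)^{-1} \int_0^r \psi(t)\, (1+t)^2 \, dt < \infty .$$
   Context: $\Gamma$ is a rooted metric tree with root $o$; $|x|$ is the distance from $x$ to $o$ along the tree. Homogeneous means: the root has exactly one emanating edge, every other vertex has the same number $b$ of emanating (forward) edges, and all edges have length $1$. Equivalently, the number of points $x\in\Gamma$ with $|x|=t$ equals $b^j$ for $j<t\le j+1$, $j\in\{0,1,2,\dots\}$. ($\lambda_b$ is the bottom of the spectrum of the Neumann Laplacian on $\Gamma$.) $\Gamma_o:=\Gamma\cup\{o\}$ and $C_0^\infty(\Gamma_o)$ denotes continuous functions on $\Gamma_o$ that are infinitely smooth on each edge and whose support is a bounded subset of $\Gamma_o$; they need not vanish at $o$. Integrals over $\Gamma$ are with respect to arc length and $u'$ is the derivative along edges. *)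

theory Defs
  imports "HOL-Analysis.Analysis"
begin

text \<open>The edges of generation j (points x with j < |x| <= j+1) are indexed by words
  w of length j over the alphabet {0..<b}; a point of Gamma is a pair (w, s) with
  s in [0,1], and |x| = length w + s. The endpoint s = 1 of edge w is the vertex
  from which the edges w @ [k], k < b, emanate (at their s = 0).
  The root o is the point s = 0 of the edge [].\<close>

definition tree_edges :: "nat \<Rightarrow> nat \<Rightarrow> nat list set" where
  "tree_edges b j = {w. length w = j \<and> (\<forall>k\<in>set w. k < b)}"

definition smooth_on_unit :: "(real \<Rightarrow> real) \<Rightarrow> bool" where
  "smooth_on_unit f \<longleftrightarrow> (\<exists>D :: nat \<Rightarrow> real \<Rightarrow> real. D 0 = f \<and>
     (\<forall>n. \<forall>x\<in>{0..1}. (D n has_real_derivative D (Suc n) x) (at x within {0..1})))"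

text \<open>C_0^infinity(Gamma_o): continuous on Gamma_o, smooth on each edge, bounded support
  (need not vanish at the root).\<close>
definition tree_C0inf :: "nat \<Rightarrow> (nat list \<Rightarrow> real \<Rightarrow> real) \<Rightarrow> bool" where
  "tree_C0inf b u \<longleftrightarrow>
     (\<forall>j. \<forall>w\<in>tree_edges b j. smooth_on_unit (u w)) \<and>
     (\<forall>j. \<forall>w\<in>tree_edges b j. \<forall>k<b. u (w @ [k]) 0 = u w 1) \<and>
     (\<exists>N. \<forall>j\<ge>N. \<forall>w\<in>tree_edges b j. \<forall>s\<in>{0..1}. u w s = 0)"

definition tree_nn_integral :: "nat \<Rightarrow> (nat list \<Rightarrow> real \<Rightarrow> ennreal) \<Rightarrow> ennreal" where
  "tree_nn_integral b f =
     (\<Sum>j. \<Sum>w\<in>tree_edges b j. set_nn_integral lborel {0..1} (f w))"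

definition tree_integral :: "nat \<Rightarrow> (nat list \<Rightarrow> real \<Rightarrow> real) \<Rightarrow> real" where
  "tree_integral b f = (\<Sum>j. \<Sum>w\<in>tree_edges b j. integral {0..1} (f w))"

definition R_b :: "nat \<Rightarrow> real" where
  "R_b b = (sqrt (real b) + 1 / sqrt (real b)) / 2"

definition lambda_b :: "nat \<Rightarrow> real" where
  "lambda_b b = (arccos (1 / R_b b))\<^sup>2"

end

theory Submission
  imports Defs
begin

definition kk :: "nat \<Rightarrow> real" where "kk b = arccos (1 / R_b b)"
definition sg :: "nat \<Rightarrow> real" where "sg b = sin (kk b)"
definition qq :: "nat \<Rightarrow> real" where "qq b = 1 / sqrt (real b)"
definition aa :: "nat \<Rightarrow> nat \<Rightarrow> real" where "aa b j = 1 + real j * sg b"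

lemma Rb_inv: assumes "b \<ge> 2" shows "1 / R_b b = 2 * sqrt b / (b + 1)"
proof -
  have r: "sqrt b > 0" using assms by simp
  have "(sqrt b)^2 = b" by simp
  then show ?thesis unfolding R_b_def using r
    by (simp add: field_simps power2_eq_square)
qed

lemma Rb_inv_bounds: assumes "b \<ge> 2" shows "0 < 1 / R_b b" "1 / R_b b < 1"
proof -
  have r: "sqrt b > 1" using assms by simp
  have sq: "(sqrt b)^2 = b" by simp
  show "0 < 1 / R_b b" using assms Rb_inv[OF assms] by simp
  have "2 * sqrt b < b + 1"
  proof -
    have "0 < (sqrt b - 1)^2" using r by simp
    also have "\<dots> = b + 1 - 2 * sqrt b" using sq by (simp add: power2_eq_square algebra_simps)
    finally show ?thesis by simp
  qed
  then show "1 / R_b b < 1" using Rb_inv[OF assms] by simp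
qed

lemma kk_bounds: assumes "b \<ge> 2" shows "0 < kk b" "kk b < pi/2"
proof -
  define y where "y = 1 / R_b b"
  have y: "0 < y" "y < 1" using Rb_inv_bounds[OF assms] y_def by auto
  have "arccos y < arccos 0" using y by (intro arccos_less_arccos) auto
  then show "kk b < pi/2" unfolding kk_def y_def[symmetric] by simp
  have "arccos 1 < arccos y" using y by (intro arccos_less_arccos) auto
  then show "0 < kk b" unfolding kk_def y_def[symmetric] by simp
qed

lemma cos_kk: assumes "b \<ge> 2" shows "cos (kk b) = 1 / R_b b"
proof -
  define y where "y = 1 / R_b b"
  have y: "0 < y" "y < 1" using Rb_inv_bounds[OF assms] y_def by auto
  show ?thesis unfolding kk_def y_def[symmetric] using y by simp
qed

lemma sg_eq: assumes "b \<ge> 2" shows "sg b = (real b - 1) / (real b + 1)"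
proof -
  have sq: "(sqrt b)^2 = b" by simp
  have "sg b = sqrt (1 - (1 / R_b b)^2)"
  proof -
    define y where "y = 1 / R_b b"
    have y: "0 < y" "y < 1" using Rb_inv_bounds[OF assms] y_def by auto
    show ?thesis unfolding sg_def kk_def y_def[symmetric] using y by (simp add: sin_arccos_abs)
  qed
  also have "1 - (1 / R_b b)^2 = ((real b - 1) / (real b + 1))^2"
  proof -
    define r where "r = sqrt (real b)"
    have br: "real b = r * r" unfolding r_def by simp
    have r: "r > 0" unfolding r_def using assms by simp
    have p: "r*r + 1 \<noteq> 0" "1 + r*r \<noteq> 0" using r by (auto simp: add_pos_nonneg add_nonneg_eq_0_iff)
    have "1 - (2 * r / (r*r + 1))^2 = ((r*r+1)^2 - (2*r)^2) / (r*r+1)^2" using p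
      by (simp add: power_divide diff_divide_distrib)
    also have "(r*r+1)^2 - (2*r)^2 = (r*r-1)^2" by (simp add: power2_eq_square algebra_simps)
    also have "(r*r-1)^2 / (r*r+1)^2 = ((r*r - 1) / (r*r + 1))^2" by (simp add: power_divide)
    finally have e: "1 - (2 * r / (r*r + 1))^2 = ((r*r - 1) / (r*r + 1))^2" .
    show ?thesis unfolding Rb_inv[OF assms] of_nat_add of_nat_1 r_def[symmetric] unfolding br by (rule e)
  qed
  also have "sqrt \<dots> = (real b - 1) / (real b + 1)" using assms by simp
  finally show ?thesis .
qed

lemma sg_bounds: assumes "b \<ge> 2" shows "0 < sg b" "sg b < 1"
  using assms by (auto simp: sg_eq[OF assms] field_simps)

lemma qq_pos: assumes "b \<ge> 2" shows "0 < qq b" "qq b < 1"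
  using assms by (auto simp: qq_def)

lemma qq_sq: assumes "b \<ge> 2" shows "real b * qq b ^ 2 = 1"
  using assms by (simp add: qq_def power_divide)

lemma cos_kk_qq: assumes "b \<ge> 2" shows "cos (kk b) * (qq b + 1 / qq b) = 2"
proof -
  have r: "sqrt b > 0" using assms by simp
  have sq: "sqrt b * sqrt b = b" by simp
  have "2 * sqrt b / (b + 1) * (1 / sqrt b + 1 / (1 / sqrt b)) = 2 * (sqrt b * (1/sqrt b) + sqrt b * sqrt b) / (b+1)"
    by (simp add: algebra_simps)
  also have "\<dots> = 2" using r sq by (simp add: field_simps)
  finally show ?thesis unfolding cos_kk[OF assms] Rb_inv[OF assms] qq_def .
qed

lemma qq_sg: assumes "b \<ge> 2" shows "qq b * (1 + sg b) = cos (kk b)"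
proof -
  have r: "sqrt b > 0" using assms by simp
  have sq: "sqrt b * sqrt b = b" by simp
  define r where "r = sqrt (real b)"
  have br: "real b = r * r" unfolding r_def by simp
  have r: "r > 0" unfolding r_def using assms by simp
  have p: "r*r + 1 \<noteq> 0" "1 + r*r \<noteq> 0" using r by (auto simp: add_pos_nonneg add_nonneg_eq_0_iff)
  have "1 / r * (1 + (r*r - 1) / (r*r + 1)) = 2 * r / (r*r + 1)" using r p
    by (simp add: field_simps)
  then show ?thesis unfolding cos_kk[OF assms] Rb_inv[OF assms] qq_def sg_eq[OF assms] of_nat_add of_nat_1 r_def[symmetric] unfolding br .
qed

lemma lambda_kk: "lambda_b b = (kk b)^2" unfolding lambda_b_def kk_def ..

definition phi :: "nat \<Rightarrow> nat \<Rightarrow> real \<Rightarrow> real" where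
  "phi b j s = qq b ^ j * (aa b j * sin (kk b * (1 - s)) + qq b * aa b (Suc j) * sin (kk b * s))"
definition dphi :: "nat \<Rightarrow> nat \<Rightarrow> real \<Rightarrow> real" where
  "dphi b j s = qq b ^ j * kk b * (- aa b j * cos (kk b * (1 - s)) + qq b * aa b (Suc j) * cos (kk b * s))"

lemma phi_deriv: "(phi b j has_real_derivative dphi b j s) (at s within S)"
  unfolding phi_def dphi_def
  by (auto intro!: derivative_eq_intros simp: algebra_simps)

lemma dphi_deriv: "(dphi b j has_real_derivative (- ((kk b)^2 * phi b j s))) (at s within S)"
  unfolding phi_def dphi_def
  by (auto intro!: derivative_eq_intros simp: algebra_simps power2_eq_square)

lemma phi_vertex: "phi b j 1 = phi b (Suc j) 0"
  unfolding phi_def by simp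

lemma aa_rec: "aa b j + aa b (Suc (Suc j)) = 2 * aa b (Suc j)"
  unfolding aa_def by (simp add: algebra_simps)

lemma dphi_vertex: assumes "b \<ge> 2" shows "dphi b j 1 = real b * dphi b (Suc j) 0"
proof -
  define q where "q = qq b"
  define c where "c = cos (kk b)"
  have q: "q > 0" using qq_pos[OF assms] q_def by simp
  have bq: "real b * q = 1 / q" using qq_sq[OF assms] q unfolding q_def[symmetric]
    by (simp add: field_simps power2_eq_square)
  have cq: "c * (q + 1/q) = 2" using cos_kk_qq[OF assms] unfolding q_def c_def .
  have key: "- aa b j + q * aa b (Suc j) * c = (1/q) * (- aa b (Suc j) * c + q * aa b (Suc (Suc j)))"
  proof -
    have "aa b j + aa b (Suc (Suc j)) = c * (q + 1/q) * aa b (Suc j)" using aa_rec cq by simp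
    then show ?thesis using q by (simp add: field_simps)
  qed
  have "real b * dphi b (Suc j) 0 = q^j * kk b * ((real b * q) * (- aa b (Suc j) * c + q * aa b (Suc (Suc j))))"
    unfolding dphi_def q_def c_def by (simp add: algebra_simps)
  also have "\<dots> = q^j * kk b * (- aa b j + q * aa b (Suc j) * c)" unfolding bq key ..
  also have "\<dots> = dphi b j 1" unfolding dphi_def q_def c_def by (simp add: algebra_simps)
  finally show ?thesis by simp
qed

lemma dphi_root: assumes "b \<ge> 2" shows "dphi b 0 0 = 0"
  unfolding dphi_def using qq_sg[OF assms] by (simp add: aa_def)

lemma aa_pos: assumes "b \<ge> 2" shows "aa b j \<ge> 1"
  using sg_bounds[OF assms] unfolding aa_def by simp

lemma aa_lower: assumes "b \<ge> 2" shows "sg b * (real j + 1) \<le> aa b j"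
proof -
  have "sg b * real j \<ge> 0" "sg b \<le> 1" using sg_bounds[OF assms] by auto
  then show ?thesis unfolding aa_def by (simp add: algebra_simps)
qed

lemma aa_Suc: assumes "b \<ge> 2" shows "aa b (Suc j) \<le> 2 * aa b j"
proof -
  have "sg b * real j \<ge> 0" "sg b \<le> 1" using sg_bounds[OF assms] by auto
  then show ?thesis unfolding aa_def by (simp add: algebra_simps)
qed

lemma aa_upper: assumes "b \<ge> 2" shows "aa b j \<le> real j + 1"
  using sg_bounds[OF assms] unfolding aa_def
  by (simp add: mult_left_le)

lemma sin_sum_ge: assumes "0 \<le> x" "x \<le> pi/2" "0 \<le> y" "y \<le> pi/2"
  shows "sin (x + y) \<le> sin x + sin y"
proof -
  have "sin x \<ge> 0" "sin y \<ge> 0" using assms by (auto intro!: sin_ge_zero)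
  moreover have "cos x \<le> 1" "cos y \<le> 1" by auto
  ultimately have "sin x * cos y \<le> sin x" "cos x * sin y \<le> sin y"
    using mult_right_mono[of "cos x" 1 "sin y"] mult_left_mono[of "cos y" 1 "sin x"] by auto
  then show ?thesis by (simp add: sin_add)
qed

lemma phi_lower: assumes "b \<ge> 2" "0 \<le> s" "s \<le> 1"
  shows "qq b ^ Suc j * aa b j * sg b \<le> phi b j s"
proof -
  define k where "k = kk b"
  define q where "q = qq b"
  have k: "0 < k" "k < pi/2" using kk_bounds[OF assms(1)] k_def by auto
  have q: "0 < q" "q < 1" using qq_pos[OF assms(1)] q_def by auto
  have "k * (1 - s) \<le> k" "k * s \<le> k" using k assms by (auto intro!: mult_left_le)
  then have kk1: "k * (1 - s) \<le> pi/2" "k * s \<le> pi/2" using k by linarith+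
  have s1: "sin (k * (1 - s)) \<ge> 0" "sin (k * s) \<ge> 0" using k assms kk1
    by (auto intro!: sin_ge_zero mult_nonneg_nonneg)
  have ss: "sin k \<le> sin (k * (1 - s)) + sin (k * s)"
    using sin_sum_ge[of "k * (1 - s)" "k * s"] k assms kk1 by (simp add: algebra_simps)
  have a: "aa b j \<ge> 1" "aa b (Suc j) \<ge> aa b j" using aa_pos[OF assms(1)] sg_bounds[OF assms(1)]
    by (auto simp: aa_def)
  have "q * aa b j * sin k \<le> q * aa b j * (sin (k * (1 - s)) + sin (k * s))"
    using ss q a by (intro mult_left_mono) auto
  also have "\<dots> = (q * aa b j) * sin (k * (1 - s)) + (q * aa b j) * sin (k * s)" by (simp add: algebra_simps)
  also have "\<dots> \<le> aa b j * sin (k * (1 - s)) + q * aa b (Suc j) * sin (k * s)"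
  proof (rule add_mono)
    show "q * aa b j * sin (k * (1 - s)) \<le> aa b j * sin (k * (1 - s))"
      using q a s1 by (intro mult_right_mono) auto
    show "q * aa b j * sin (k * s) \<le> q * aa b (Suc j) * sin (k * s)"
      using q a s1 by (intro mult_right_mono) auto
  qed
  finally have "q * aa b j * sin k \<le> aa b j * sin (k * (1 - s)) + q * aa b (Suc j) * sin (k * s)" .
  then have "q^j * (q * aa b j * sin k) \<le> q^j * (aa b j * sin (k * (1 - s)) + q * aa b (Suc j) * sin (k * s))"
    using q by (intro mult_left_mono) auto
  then show ?thesis unfolding phi_def sg_def k_def[symmetric] q_def[symmetric] by (simp add: algebra_simps)
qed

lemma phi_upper: assumes "b \<ge> 2" "0 \<le> s" "s \<le> 1"
  shows "phi b j s \<le> 2 * qq b ^ j * aa b (Suc j)"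
proof -
  define k where "k = kk b"
  define q where "q = qq b"
  have q: "0 < q" "q < 1" using qq_pos[OF assms(1)] q_def by auto
  have a: "aa b j \<ge> 1" "aa b (Suc j) \<ge> aa b j" using aa_pos[OF assms(1)] sg_bounds[OF assms(1)]
    by (auto simp: aa_def)
  have "aa b j * sin (k * (1 - s)) \<le> aa b (Suc j)"
    using a by (intro order_trans[OF mult_left_le]) auto
  moreover have "q * aa b (Suc j) * sin (k * s) \<le> aa b (Suc j)"
  proof -
    have "q * aa b (Suc j) * sin (k * s) \<le> q * aa b (Suc j)" using q a by (intro mult_left_le) auto
    also have "\<dots> \<le> aa b (Suc j)" using q a by (intro mult_left_le_one_le) auto
    finally show ?thesis .
  qed
  ultimately have "aa b j * sin (k * (1 - s)) + q * aa b (Suc j) * sin (k * s) \<le> 2 * aa b (Suc j)" by simp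
  then have "q^j * (aa b j * sin (k * (1 - s)) + q * aa b (Suc j) * sin (k * s)) \<le> q^j * (2 * aa b (Suc j))"
    using q by (intro mult_left_mono) auto
  then show ?thesis unfolding phi_def k_def[symmetric] q_def[symmetric] by (simp add: algebra_simps)
qed

lemma phi_pos: assumes "b \<ge> 2" "0 \<le> s" "s \<le> 1" shows "phi b j s > 0"
proof -
  have "0 < qq b ^ Suc j * aa b j * sg b" using qq_pos[OF assms(1)] aa_pos[OF assms(1)] sg_bounds[OF assms(1)]
    by (simp add: less_le_trans[OF zero_less_one])
  then show ?thesis using phi_lower[OF assms, of j] by linarith
qed

lemma smooth_C1:
  assumes "smooth_on_unit u"
  obtains u' where "continuous_on {0..1} u'" "continuous_on {0..1} u"
    "\<And>x. x \<in> {0..1} \<Longrightarrow> (u has_real_derivative u' x) (at x within {0..1})"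
    "\<And>x. x \<in> {0<..<1} \<Longrightarrow> deriv u x = u' x"
proof -
  obtain D where D0: "D 0 = u" and D: "\<And>n x. x \<in> {0..1} \<Longrightarrow> (D n has_real_derivative D (Suc n) x) (at x within {0..1})"
    using assms unfolding smooth_on_unit_def by blast
  have du: "\<And>x. x \<in> {0..1} \<Longrightarrow> (u has_real_derivative D 1 x) (at x within {0..1})"
    using D[of _ 0] D0 by simp
  show ?thesis
  proof
    show "continuous_on {0..1} (D 1)" using D[of _ 1] by (intro DERIV_continuous_on) auto
    show "continuous_on {0..1} u" using du by (intro DERIV_continuous_on) auto
    show "\<And>x. x \<in> {0..1} \<Longrightarrow> (u has_real_derivative D 1 x) (at x within {0..1})" by (rule du)
    fix x :: real assume x: "x \<in> {0<..<1}"
    then have "(u has_real_derivative D 1 x) (at x)" using du[of x] by (simp add: at_within_Icc_at)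
    then show "deriv u x = D 1 x" by (rule DERIV_imp_deriv)
  qed
qed

definition rho :: "nat \<Rightarrow> nat \<Rightarrow> real \<Rightarrow> real" where
  "rho b j s = dphi b j s / phi b j s"

lemma phi_cont: "continuous_on S (phi b j)"
  using phi_deriv by (intro DERIV_continuous_on) blast

lemma dphi_cont: "continuous_on S (dphi b j)"
  using dphi_deriv by (intro DERIV_continuous_on) blast

lemma rho_cont: assumes "b \<ge> 2" shows "continuous_on {0..1} (rho b j)"
  unfolding rho_def using phi_pos[OF assms] by (intro continuous_intros phi_cont dphi_cont) (metis atLeastAtMost_iff less_irrefl)

lemma rho_deriv: assumes "b \<ge> 2" "x \<in> {0..1}"
  shows "(rho b j has_real_derivative (- lambda_b b - (rho b j x)^2)) (at x within {0..1})"
proof -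
  have p: "phi b j x \<noteq> 0" using phi_pos[OF assms(1), of x j] assms(2) by auto
  have "(rho b j has_real_derivative (- ((kk b)^2 * phi b j x) * phi b j x - dphi b j x * dphi b j x) / (phi b j x * phi b j x)) (at x within {0..1})"
    unfolding rho_def using p by (intro DERIV_divide dphi_deriv phi_deriv)
  moreover have "(- ((kk b)^2 * phi b j x) * phi b j x - dphi b j x * dphi b j x) / (phi b j x * phi b j x) = - lambda_b b - (rho b j x)^2"
    unfolding rho_def lambda_kk using p by (simp add: field_simps power2_eq_square)
  ultimately show ?thesis by simp
qed

lemma edge_identity:
  assumes b: "b \<ge> 2" and u: "smooth_on_unit u"
  shows "((\<lambda>s. (deriv u s)^2 - lambda_b b * (u s)^2) has_integral
     (integral {0..1} (\<lambda>s. (deriv u s - rho b j s * u s)^2) + rho b j 1 * (u 1)^2 - rho b j 0 * (u 0)^2)) {0..1}"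
proof -
  obtain u' where c': "continuous_on {0..1} u'" and cu: "continuous_on {0..1} u"
    and du: "\<And>x. x \<in> {0..1} \<Longrightarrow> (u has_real_derivative u' x) (at x within {0..1})"
    and de: "\<And>x. x \<in> {0<..<1} \<Longrightarrow> deriv u x = u' x"
    using smooth_C1[OF u] by blast
  define G where "G s = rho b j s * (u s)^2" for s
  define G' where "G' s = (- lambda_b b - (rho b j s)^2) * (u s)^2 + rho b j s * (2 * u s * u' s)" for s
  have dG: "(G has_vector_derivative G' x) (at x within {0..1})" if "x \<in> {0..1}" for x
    unfolding has_real_derivative_iff_has_vector_derivative[symmetric] G_def G'_def
    using that by (auto intro!: derivative_eq_intros rho_deriv[OF b] du)
  have i1: "(G' has_integral (G 1 - G 0)) {0..1}"
    by (rule fundamental_theorem_of_calculus) (auto intro: dG)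
  have "continuous_on {0..1} (\<lambda>s. (u' s - rho b j s * u s)^2)"
    by (intro continuous_intros c' cu rho_cont[OF b])
  then have i2: "((\<lambda>s. (u' s - rho b j s * u s)^2) has_integral integral {0..1} (\<lambda>s. (u' s - rho b j s * u s)^2)) {0..1}"
    by (intro integrable_integral integrable_continuous_interval)
  have "((\<lambda>s. (u' s - rho b j s * u s)^2 + G' s) has_integral integral {0..1} (\<lambda>s. (u' s - rho b j s * u s)^2) + (G 1 - G 0)) {0..1}"
    by (intro has_integral_add i1 i2)
  then have i3: "((\<lambda>s. (u' s)^2 - lambda_b b * (u s)^2) has_integral integral {0..1} (\<lambda>s. (u' s - rho b j s * u s)^2) + (G 1 - G 0)) {0..1}"
    by (rule has_integral_eq[rotated]) (simp add: G'_def power2_eq_square algebra_simps)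
  have "integral {0..1} (\<lambda>s. (u' s - rho b j s * u s)^2) = integral {0..1} (\<lambda>s. (deriv u s - rho b j s * u s)^2)"
  proof (rule integral_spike[of "{0,1}"])
    show "negligible {0::real, 1}" by auto
  qed (auto simp: de)
  moreover have "((\<lambda>s. (deriv u s)^2 - lambda_b b * (u s)^2) has_integral integral {0..1} (\<lambda>s. (u' s - rho b j s * u s)^2) + (G 1 - G 0)) {0..1}"
    by (rule has_integral_spike_finite[of "{0,1}", OF _ _ i3]) (auto simp: de)
  ultimately show ?thesis unfolding G_def by (simp add: algebra_simps)
qed

lemma tree_edges_0: "tree_edges b 0 = {[]}"
  unfolding tree_edges_def by auto

lemma tree_edges_Suc: "tree_edges b (Suc j) = (\<lambda>(w,k). w @ [k]) ` (tree_edges b j \<times> {..<b})"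
proof (rule set_eqI)
  fix x show "x \<in> tree_edges b (Suc j) \<longleftrightarrow> x \<in> (\<lambda>(w,k). w @ [k]) ` (tree_edges b j \<times> {..<b})"
  proof
    assume x: "x \<in> tree_edges b (Suc j)"
    then have "x \<noteq> []" by (auto simp: tree_edges_def)
    then obtain w k where "x = w @ [k]" by (cases x rule: rev_cases) auto
    then show "x \<in> (\<lambda>(w,k). w @ [k]) ` (tree_edges b j \<times> {..<b})"
      using x unfolding tree_edges_def by (auto intro!: image_eqI[of _ _ "(w,k)"])
  qed (auto simp: tree_edges_def)
qed

lemma tree_edges_finite: "finite (tree_edges b j)"
  by (induction j) (auto simp: tree_edges_0 tree_edges_Suc)

lemma inj_snoc: "inj_on (\<lambda>(w,k). w @ [k]) A"
  by (auto simp: inj_on_def)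

lemma sum_tree_Suc: "(\<Sum>w\<in>tree_edges b (Suc j). f w) = (\<Sum>w\<in>tree_edges b j. \<Sum>k<b. f (w @ [k]))"
  unfolding tree_edges_Suc
  by (subst sum.reindex[OF inj_snoc]) (simp add: sum.cartesian_product split_def)

lemma card_tree_edges: "card (tree_edges b j) = b ^ j"
proof (induction j)
  case 0 then show ?case by (simp add: tree_edges_0)
next
  case (Suc j)
  have "card (tree_edges b (Suc j)) = card (tree_edges b j \<times> {..<b})"
    unfolding tree_edges_Suc by (rule card_image[OF inj_snoc])
  then show ?case using Suc by (simp add: card_cartesian_product)
qed

lemma sum_tree_const: "(\<Sum>w\<in>tree_edges b j. c) = real b ^ j * c"
  by (simp add: card_tree_edges)

definition Iw :: "nat \<Rightarrow> nat \<Rightarrow> (real \<Rightarrow> real) \<Rightarrow> real" where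
  "Iw b j f = integral {0..1} (\<lambda>s. (deriv f s - rho b j s * f s)^2)"

lemma rho_vertex: assumes "b \<ge> 2" shows "rho b j 1 = real b * rho b (Suc j) 0"
  unfolding rho_def dphi_vertex[OF assms] phi_vertex by simp

lemma rho_root: assumes "b \<ge> 2" shows "rho b 0 0 = 0"
  unfolding rho_def dphi_root[OF assms] by simp

lemma deriv_zero_interior:
  fixes f :: "real \<Rightarrow> real" and s :: real
  assumes "\<forall>s\<in>{0..1}. f s = 0" "s \<in> {0<..<1}"
  shows "deriv f s = 0"
proof -
  have "((\<lambda>_. 0::real) has_field_derivative 0) (at s)" by simp
  then have "(f has_field_derivative 0) (at s)"
    by (rule has_field_derivative_transform_within_open[of _ _ _ "{0<..<1}"]) (use assms in auto)
  then show ?thesis by (rule DERIV_imp_deriv)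
qed

lemma Iw_zero: fixes f :: "real \<Rightarrow> real" assumes "\<forall>s\<in>{0..1}. f s = 0" shows "Iw b j f = 0"
proof -
  have "((\<lambda>s. (deriv f s - rho b j s * f s)^2) has_integral 0) {0..1}"
  proof (rule has_integral_spike_finite[of "{0,1}" _ _ "\<lambda>_. 0"])
    fix x :: real assume "x \<in> {0..1} - {0,1}"
    then show "(deriv f x - rho b j x * f x)^2 = 0"
      using assms deriv_zero_interior[OF assms(1), of x] by auto
  qed auto
  then show ?thesis unfolding Iw_def by (rule integral_unique)
qed

lemma Q_identity:
  assumes b: "b \<ge> 2" and u: "tree_C0inf b u"
    and N: "\<forall>j\<ge>N. \<forall>w\<in>tree_edges b j. \<forall>s\<in>{0..1}. u w s = 0"
  shows "tree_integral b (\<lambda>w s. (deriv (u w) s)^2 - lambda_b b * (u w s)^2)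
       = (\<Sum>j<N. \<Sum>w\<in>tree_edges b j. Iw b j (u w))"
proof -
  have sm: "smooth_on_unit (u w)" if "w \<in> tree_edges b j" for w j
    using u that unfolding tree_C0inf_def by blast
  have cont: "u (w @ [k]) 0 = u w 1" if "w \<in> tree_edges b j" "k < b" for w j k
    using u that unfolding tree_C0inf_def by blast
  have lenw: "length w = j" if "w \<in> tree_edges b j" for w j using that by (simp add: tree_edges_def)
  define X where "X j = (\<Sum>w\<in>tree_edges b j. rho b j 0 * (u w 0)^2)" for j
  define Y where "Y j = (\<Sum>w\<in>tree_edges b j. rho b j 1 * (u w 1)^2)" for j
  define E where "E j = (\<Sum>w\<in>tree_edges b j. Iw b j (u w))" for j
  have int: "integral {0..1} (\<lambda>s. (deriv (u w) s)^2 - lambda_b b * (u w s)^2)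
       = Iw b j (u w) + rho b j 1 * (u w 1)^2 - rho b j 0 * (u w 0)^2" if "w \<in> tree_edges b j" for w j
    unfolding Iw_def by (rule integral_unique[OF edge_identity[OF b sm[OF that]]])
  have trm: "(\<Sum>w\<in>tree_edges b j. integral {0..1} (\<lambda>s. (deriv (u w) s)^2 - lambda_b b * (u w s)^2))
      = E j + Y j - X j" for j
    unfolding E_def X_def Y_def by (simp add: int sum.distrib sum_subtractf)
  have YX: "Y j = X (Suc j)" for j
  proof -
    have "X (Suc j) = (\<Sum>w\<in>tree_edges b j. \<Sum>k<b. rho b (Suc j) 0 * (u (w @ [k]) 0)^2)"
      unfolding X_def sum_tree_Suc ..
    also have "\<dots> = (\<Sum>w\<in>tree_edges b j. \<Sum>k<b. rho b (Suc j) 0 * (u w 1)^2)"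
      by (intro sum.cong refl) (simp add: cont)
    also have "\<dots> = Y j" unfolding Y_def rho_vertex[OF b] by (simp add: sum_distrib_left mult.assoc)
    finally show ?thesis by simp
  qed
  have X0: "X 0 = 0" unfolding X_def by (simp add: rho_root[OF b])
  have zero: "u w s = 0" if "j \<ge> N" "w \<in> tree_edges b j" "s \<in> {0..1}" for j w s
    using N that by blast
  have Ej: "E j = 0" "X j = 0" "Y j = 0" if "j \<ge> N" for j
    unfolding E_def X_def Y_def using that zero by (auto intro!: sum.neutral Iw_zero)
  have "tree_integral b (\<lambda>w s. (deriv (u w) s)^2 - lambda_b b * (u w s)^2) = (\<Sum>j. E j + Y j - X j)"
    unfolding tree_integral_def trm ..
  also have "\<dots> = (\<Sum>j<N. E j + Y j - X j)"
    by (rule suminf_finite) (auto simp: Ej)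
  also have "\<dots> = (\<Sum>j<N. E j) + X N - X 0"
    unfolding YX by (induction N) (auto simp: algebra_simps)
  also have "\<dots> = (\<Sum>j<N. E j)" using Ej X0 by simp
  finally show ?thesis unfolding E_def .
qed

lemma cs_int:
  fixes h :: "real \<Rightarrow> real"
  assumes h: "continuous_on {0..1} h" and s: "0 \<le> s" "s \<le> 1"
  shows "(integral {0..s} h)^2 \<le> integral {0..1} (\<lambda>x. (h x)^2)"
proof -
  have h2: "continuous_on {0..1} (\<lambda>x. (h x)^2)" by (intro continuous_intros h)
  have nn1: "0 \<le> integral {0..1} (\<lambda>x. (h x)^2)"
    by (rule integral_nonneg) (auto intro: integrable_continuous_interval h2)
  show ?thesis
  proof (cases "s = 0")
    case True then show ?thesis using nn1 by simp
  next
    case False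
    then have sp: "s > 0" using s by simp
    have sub: "{0..s} \<subseteq> {0..1}" using s by auto
    have hs: "continuous_on {0..s} h" using continuous_on_subset[OF h sub] .
    have ih: "h integrable_on {0..s}" by (rule integrable_continuous_interval[OF hs])
    have ih2: "(\<lambda>x. (h x)^2) integrable_on {0..s}"
      by (rule integrable_continuous_interval) (intro continuous_intros hs)
    define A where "A = integral {0..s} h"
    define c where "c = A / s"
    have ic: "(\<lambda>x. 2 * c * h x) integrable_on {0..s}" by (intro integrable_continuous_interval continuous_intros hs)
    have "0 \<le> integral {0..s} (\<lambda>x. (h x - c)^2)"
      by (rule integral_nonneg) (auto intro!: integrable_continuous_interval continuous_intros hs)
    also have "integral {0..s} (\<lambda>x. (h x - c)^2) = integral {0..s} (\<lambda>x. ((h x)^2 - 2 * c * h x) + c^2)"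
      by (simp add: power2_eq_square algebra_simps)
    also have "\<dots> = integral {0..s} (\<lambda>x. (h x)^2 - 2 * c * h x) + integral {0..s} (\<lambda>x. c^2)"
      by (rule integral_add) (auto intro: integrable_diff ih2 ic)
    also have "integral {0..s} (\<lambda>x. (h x)^2 - 2 * c * h x) = integral {0..s} (\<lambda>x. (h x)^2) - integral {0..s} (\<lambda>x. 2 * c * h x)"
      by (rule integral_diff[OF ih2 ic])
    also have "integral {0..s} (\<lambda>x. 2 * c * h x) = 2 * c * A"
      unfolding A_def by simp
    also have "integral {0..s} (\<lambda>x. c^2) = s * c^2" using s by simp
    finally have "0 \<le> integral {0..s} (\<lambda>x. (h x)^2) - 2 * c * A + s * c^2" .
    moreover have "- 2 * c * A + s * c^2 = -(A^2 / s)" unfolding c_def using sp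
      by (simp add: field_simps power2_eq_square)
    ultimately have "A^2 / s \<le> integral {0..s} (\<lambda>x. (h x)^2)" by simp
    then have "A^2 \<le> s * integral {0..s} (\<lambda>x. (h x)^2)" using sp by (simp add: field_simps)
    also have "\<dots> \<le> integral {0..s} (\<lambda>x. (h x)^2)"
    proof -
      have "0 \<le> integral {0..s} (\<lambda>x. (h x)^2)" by (rule integral_nonneg[OF ih2]) simp
      then show ?thesis using s by (simp add: mult_left_le_one_le)
    qed
    also have "\<dots> \<le> integral {0..1} (\<lambda>x. (h x)^2)"
      by (rule integral_subset_le[OF sub ih2]) (auto intro: integrable_continuous_interval h2)
    finally show ?thesis unfolding A_def .
  qed
qed

definition mlow :: "nat \<Rightarrow> nat \<Rightarrow> real" where "mlow b j = qq b ^ Suc j * aa b j * sg b"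
definition mup :: "nat \<Rightarrow> nat \<Rightarrow> real" where "mup b j = 2 * qq b ^ j * aa b (Suc j)"

lemma mlow_pos: assumes "b \<ge> 2" shows "mlow b j > 0"
  unfolding mlow_def using qq_pos[OF assms] aa_pos[OF assms, of j] sg_bounds[OF assms] by simp

lemma edge_bounds:
  assumes b: "b \<ge> 2" and f: "smooth_on_unit f"
  shows "(f 1 / phi b j 1 - f 0 / phi b j 0)^2 \<le> Iw b j f / (mlow b j)^2"
    and "\<And>s. s \<in> {0..1} \<Longrightarrow> (f s)^2 \<le> (mup b j)^2 * (2 * (f 0 / phi b j 0)^2 + 2 * (Iw b j f / (mlow b j)^2))"
    and "Iw b j f \<ge> 0"
proof -
  obtain u' where c': "continuous_on {0..1} u'" and cu: "continuous_on {0..1} f"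
    and du: "\<And>x. x \<in> {0..1} \<Longrightarrow> (f has_real_derivative u' x) (at x within {0..1})"
    and de: "\<And>x. x \<in> {0<..<1} \<Longrightarrow> deriv f x = u' x"
    using smooth_C1[OF f] by blast
  define m where "m = mlow b j"
  have m: "m > 0" using mlow_pos[OF b] m_def by simp
  have php: "phi b j x > 0" if "x \<in> {0..1}" for x using phi_pos[OF b] that by auto
  have phl: "m \<le> phi b j x" if "x \<in> {0..1}" for x using phi_lower[OF b] that unfolding m_def mlow_def by auto
  define g where "g x = f x / phi b j x" for x
  define g' where "g' x = (u' x - rho b j x * f x) / phi b j x" for x
  have dg: "(g has_real_derivative g' x) (at x within {0..1})" if x: "x \<in> {0..1}" for x
  proof -
    have "(g has_real_derivative (u' x * phi b j x - f x * dphi b j x) / (phi b j x * phi b j x)) (at x within {0..1})"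
      unfolding g_def using php[OF x] by (intro DERIV_divide du x phi_deriv) auto
    moreover have "(u' x * phi b j x - f x * dphi b j x) / (phi b j x * phi b j x) = g' x"
      unfolding g'_def rho_def using php[OF x] by (simp add: field_simps)
    ultimately show ?thesis by simp
  qed
  have cg': "continuous_on {0..1} g'" unfolding g'_def using php
    by (intro continuous_intros c' cu rho_cont[OF b] phi_cont) (metis less_irrefl)
  have Iw_eq: "Iw b j f = integral {0..1} (\<lambda>s. (u' s - rho b j s * f s)^2)"
    unfolding Iw_def
  proof (rule integral_spike[of "{0::real,1}"])
    show "negligible {0::real, 1}" by auto
  qed (auto simp: de)
  have ci: "continuous_on {0..1} (\<lambda>s. (u' s - rho b j s * f s)^2)"
    by (intro continuous_intros c' cu rho_cont[OF b])
  show "Iw b j f \<ge> 0" unfolding Iw_eq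
    by (rule integral_nonneg) (auto intro: integrable_continuous_interval ci)
  have g'bound: "integral {0..1} (\<lambda>x. (g' x)^2) \<le> Iw b j f / m^2"
  proof -
    have "integral {0..1} (\<lambda>x. (g' x)^2) \<le> integral {0..1} (\<lambda>x. (u' x - rho b j x * f x)^2 / m^2)"
    proof (rule integral_le)
      show "(\<lambda>x. (g' x)^2) integrable_on {0..1}"
        by (intro integrable_continuous_interval continuous_intros cg')
      show "(\<lambda>x. (u' x - rho b j x * f x)^2 / m^2) integrable_on {0..1}"
        using m by (intro integrable_continuous_interval continuous_intros c' cu rho_cont[OF b]) auto
      fix x :: real assume x: "x \<in> {0..1}"
      have "(g' x)^2 = (u' x - rho b j x * f x)^2 / (phi b j x)^2"
        unfolding g'_def by (simp add: power_divide)
      also have "\<dots> \<le> (u' x - rho b j x * f x)^2 / m^2"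
        using phl[OF x] m by (intro divide_left_mono power_mono) auto
      finally show "(g' x)^2 \<le> (u' x - rho b j x * f x)^2 / m^2" .
    qed
    also have "\<dots> = Iw b j f / m^2" unfolding Iw_eq by simp
    finally show ?thesis .
  qed
  have ftc: "g s - g 0 = integral {0..s} g'" if s: "s \<in> {0..1}" for s
  proof -
    have "(g' has_integral (g s - g 0)) {0..s}"
    proof (rule fundamental_theorem_of_calculus)
      show "0 \<le> s" using s by simp
      fix x assume x: "x \<in> {0..s}"
      then have x1: "x \<in> {0..1}" using s by auto
      have "(g has_real_derivative g' x) (at x within {0..s})"
        by (rule DERIV_subset[OF dg[OF x1]]) (use s in auto)
      then show "(g has_vector_derivative g' x) (at x within {0..s})"
        by (simp add: has_real_derivative_iff_has_vector_derivative)
    qed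
    then show ?thesis by (simp add: integral_unique)
  qed
  have dif: "(g s - g 0)^2 \<le> Iw b j f / m^2" if s: "s \<in> {0..1}" for s
    unfolding ftc[OF s] using cs_int[OF cg', of s] s g'bound by auto
  show "(f 1 / phi b j 1 - f 0 / phi b j 0)^2 \<le> Iw b j f / (mlow b j)^2"
    using dif[of 1] unfolding g_def m_def by simp
  fix s :: real assume s: "s \<in> {0..1}"
  have "(g s)^2 \<le> 2 * (g 0)^2 + 2 * (g s - g 0)^2"
  proof -
    have "0 \<le> (g s - 2 * g 0)^2" by simp
    then show ?thesis by (simp add: power2_eq_square algebra_simps)
  qed
  also have "\<dots> \<le> 2 * (g 0)^2 + 2 * (Iw b j f / m^2)" using dif[OF s] by simp
  finally have gs: "(g s)^2 \<le> 2 * (g 0)^2 + 2 * (Iw b j f / m^2)" .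
  have fs: "f s = phi b j s * g s" unfolding g_def using php[OF s] by simp
  have "(f s)^2 = (phi b j s)^2 * (g s)^2" unfolding fs by (simp add: power_mult_distrib)
  also have "\<dots> \<le> (mup b j)^2 * (g s)^2"
    using phi_upper[OF b, of s j] php[OF s] s unfolding mup_def
    by (intro mult_right_mono power_mono) auto
  also have "\<dots> \<le> (mup b j)^2 * (2 * (g 0)^2 + 2 * (Iw b j f / m^2))"
    by (intro mult_left_mono gs) simp
  finally show "(f s)^2 \<le> (mup b j)^2 * (2 * (f 0 / phi b j 0)^2 + 2 * (Iw b j f / (mlow b j)^2))"
    unfolding g_def m_def .
qed

lemma sqrt_step1:
  fixes a M K :: real
  assumes a: "a > 0" and M: "0 \<le> M" "M \<le> K * a"
  shows "M * (1 / sqrt a - 1 / sqrt (a + 1)) \<le> K * (sqrt (a + 1) - sqrt a)"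
proof -
  define s where "s = sqrt a"
  define t where "t = sqrt (a + 1)"
  have s: "s > 0" "s^2 = a" using a unfolding s_def by auto
  have t: "t > 0" "t^2 = a + 1" using a unfolding t_def by auto
  have st: "s < t" unfolding s_def t_def by simp
  have d: "1 / s - 1 / t \<ge> 0" using s t st by (simp add: field_simps)
  have K: "K \<ge> 0" using M a by (metis mult_nonneg_nonneg zero_le_mult_iff less_le_not_le order_trans)
  have "M * (1 / s - 1 / t) \<le> K * a * (1 / s - 1 / t)" using M d by (intro mult_right_mono) auto
  also have "\<dots> \<le> K * (t - s)"
  proof -
    have "a * (1 / s - 1 / t) \<le> t - s"
    proof -
      have "a * (1 / s - 1 / t) = s * (t - s) / t" using s t by (simp add: field_simps power2_eq_square)
      also have "\<dots> \<le> t - s"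
      proof -
        have "s * (t - s) \<le> (t - s) * t" using mult_right_mono[of s t "t-s"] st s by (simp add: mult.commute)
        then show ?thesis using t by (simp add: divide_le_eq mult.commute)
      qed
      finally show ?thesis .
    qed
    then show ?thesis using K by (metis mult.assoc mult_left_mono)
  qed
  finally show ?thesis unfolding s_def t_def .
qed

lemma sqrt_step2:
  fixes a :: real assumes a: "a > 0"
  shows "sqrt a / (a * (a + 1)) \<le> 2 * (1 / sqrt a - 1 / sqrt (a + 1))"
proof -
  define s where "s = sqrt a"
  define t where "t = sqrt (a + 1)"
  have s: "s > 0" "s^2 = a" using a unfolding s_def by auto
  have t: "t > 0" "t^2 = a + 1" using a unfolding t_def by auto
  have "2 * t * s \<le> s^2 + t^2" using sum_squares_bound[of t s] by (simp add: algebra_simps power2_eq_square)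
  then have key: "1 \<le> 2 * t * (t - s)" using s t by (simp add: algebra_simps power2_eq_square)
  have "sqrt a / (a * (a + 1)) = s / ((s * s) * (t * t))" using s t unfolding s_def[symmetric]
    by (simp add: power2_eq_square)
  also have "\<dots> = 1 / (s * t^2)" using s(1) t(1) by (simp add: field_simps power2_eq_square)
  also have "\<dots> \<le> 2 * t * (t - s) / (s * t^2)" using key s t by (intro divide_right_mono) auto
  also have "\<dots> = 2 * (1 / s - 1 / t)" using s(1) t(1) by (simp add: field_simps power2_eq_square)
  finally show ?thesis unfolding s_def t_def .
qed

lemma gg_bound:
  fixes \<mu> :: "nat \<Rightarrow> real" and K :: real
  assumes mu: "\<And>i. \<mu> i \<ge> 0" and K: "\<And>n. (\<Sum>i\<le>n. \<mu> i) \<le> K * (real n + 1)"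
  shows "(\<Sum>i\<le>n. \<mu> i / sqrt (real i + 1)) \<le> 2 * K * sqrt (real n + 1)"
proof -
  have K0: "K \<ge> 0" using K[of 0] mu[of 0] by simp
  have ind: "(\<Sum>i\<le>n. \<mu> i / sqrt (real i + 1)) \<le> (\<Sum>i\<le>n. \<mu> i) / sqrt (real n + 1) + K * (sqrt (real n + 1) - 1)" for n
  proof (induction n)
    case 0 then show ?case by simp
  next
    case (Suc n)
    define M where "M = (\<Sum>i\<le>n. \<mu> i)"
    have M: "0 \<le> M" "M \<le> K * (real n + 1)" using K[of n] mu unfolding M_def by (auto intro: sum_nonneg)
    have st: "M * (1 / sqrt (real n + 1) - 1 / sqrt (real n + 1 + 1)) \<le> K * (sqrt (real n + 1 + 1) - sqrt (real n + 1))"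
      by (rule sqrt_step1) (use M in auto)
    have "(\<Sum>i\<le>Suc n. \<mu> i / sqrt (real i + 1)) = (\<Sum>i\<le>n. \<mu> i / sqrt (real i + 1)) + \<mu> (Suc n) / sqrt (real n + 1 + 1)"
      by (simp add: add.commute)
    also have "\<dots> \<le> M / sqrt (real n + 1) + K * (sqrt (real n + 1) - 1) + \<mu> (Suc n) / sqrt (real n + 1 + 1)"
      using Suc.IH unfolding M_def by simp
    also have "\<dots> \<le> (M + \<mu> (Suc n)) / sqrt (real n + 1 + 1) + K * (sqrt (real n + 1 + 1) - 1)"
    proof -
      have e1: "M * (1 / sqrt (real n + 1) - 1 / sqrt (real n + 1 + 1)) = M / sqrt (real n + 1) - M / sqrt (real n + 1 + 1)"
        by (simp add: right_diff_distrib)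
      have e2: "(M + \<mu> (Suc n)) / sqrt (real n + 1 + 1) = M / sqrt (real n + 1 + 1) + \<mu> (Suc n) / sqrt (real n + 1 + 1)"
        by (simp add: add_divide_distrib)
      have e3: "K * (sqrt (real n + 1 + 1) - sqrt (real n + 1)) = K * (sqrt (real n + 1 + 1) - 1) - K * (sqrt (real n + 1) - 1)"
        by (simp add: right_diff_distrib)
      show ?thesis using st unfolding e1 e2 e3 by linarith
    qed
    also have "(M + \<mu> (Suc n)) = (\<Sum>i\<le>Suc n. \<mu> i)" unfolding M_def by simp
    finally show ?case by (simp add: add.commute add.left_commute)
  qed
  have "(\<Sum>i\<le>n. \<mu> i) / sqrt (real n + 1) \<le> K * (real n + 1) / sqrt (real n + 1)"
    using K[of n] by (intro divide_right_mono) auto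
  also have "\<dots> = K * sqrt (real n + 1)"
  proof -
    have "(real n + 1) / sqrt (real n + 1) = sqrt (real n + 1)" by (rule real_div_sqrt) simp
    then show ?thesis by (simp only: times_divide_eq_right[symmetric])
  qed
  finally have "(\<Sum>i\<le>n. \<mu> i) / sqrt (real n + 1) \<le> K * sqrt (real n + 1)" .
  then show ?thesis using ind[of n] K0 by (simp add: algebra_simps)
qed

lemma sbp:
  fixes d z :: "nat \<Rightarrow> real"
  shows "(\<Sum>j<N. (\<Sum>i<Suc j. d i) * (z j - z (Suc j))) = (\<Sum>j<N. d j * z j) - (\<Sum>i<N. d i) * z N"
  by (induction N) (simp_all add: algebra_simps)

lemma hardy_discrete:
  fixes \<mu> T :: "nat \<Rightarrow> real" and K :: real and N :: nat
  assumes mu: "\<And>i. \<mu> i \<ge> 0" and K: "\<And>n. (\<Sum>i\<le>n. \<mu> i) \<le> K * (real n + 1)"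
    and T: "\<And>j. T j \<ge> 0" and TN: "T N = 0"
  shows "\<exists>h \<Delta>. (\<forall>j. h j > 0) \<and> (\<forall>j<N. h j - h (Suc j) = \<Delta> j) \<and> (\<forall>j. \<Delta> j \<ge> 0) \<and>
     (\<Sum>j<N. \<mu> j * T j) \<le> (4 * K + 1) * (\<Sum>j<N. (real j + 1) * (real j + 2) * \<Delta> j * (T j / h j - T (Suc j) / h (Suc j)))"
proof -
  have K0: "K \<ge> 0" using K[of 0] mu[of 0] by simp
  define d where "d i = \<mu> i / sqrt (real i + 1)" for i
  define gg where "gg n = (\<Sum>i<n. d i)" for n
  define \<Delta> where "\<Delta> j = gg (Suc j) / ((real j + 1) * (real j + 2))" for j
  define h where "h j = 1 / sqrt (real N + 1) + (\<Sum>l\<in>{j..<N}. \<Delta> l)" for j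
  have d0: "d i \<ge> 0" for i unfolding d_def using mu by simp
  have gg0: "gg n \<ge> 0" for n unfolding gg_def using d0 by (simp add: sum_nonneg)
  have D0: "\<Delta> j \<ge> 0" for j unfolding \<Delta>_def using gg0 by simp
  have hpos: "h j > 0" for j unfolding h_def using D0 by (intro add_pos_nonneg sum_nonneg) auto
  have hstep: "h j - h (Suc j) = \<Delta> j" if "j < N" for j
  proof -
    have "{j..<N} = insert j {Suc j..<N}" using that by auto
    then show ?thesis unfolding h_def by simp
  qed
  have ggb: "gg (Suc l) \<le> 2 * K * sqrt (real l + 1)" for l
    unfolding gg_def d_def using gg_bound[OF mu K, of l] by (simp add: lessThan_Suc_atMost)
  have Db: "\<Delta> l \<le> 4 * K * (1 / sqrt (real l + 1) - 1 / sqrt (real (Suc l) + 1))" for l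
  proof -
    have "\<Delta> l \<le> 2 * K * sqrt (real l + 1) / ((real l + 1) * (real l + 2))"
      unfolding \<Delta>_def using ggb[of l] by (intro divide_right_mono) auto
    also have "\<dots> = 2 * K * (sqrt (real l + 1) / ((real l + 1) * ((real l + 1) + 1)))"
      by (simp add: algebra_simps)
    also have "\<dots> \<le> 2 * K * (2 * (1 / sqrt (real l + 1) - 1 / sqrt ((real l + 1) + 1)))"
      using K0 by (intro mult_left_mono sqrt_step2) auto
    finally show ?thesis by (simp add: algebra_simps)
  qed
  have hb: "h j * sqrt (real j + 1) \<le> 4 * K + 1" if "j \<le> N" for j
  proof -
    define f where "f l = 1 / sqrt (real l + 1)" for l
    have "(\<Sum>l\<in>{j..<N}. \<Delta> l) \<le> (\<Sum>l\<in>{j..<N}. 4 * K * (f l - f (Suc l)))"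
      unfolding f_def by (intro sum_mono Db)
    also have "\<dots> = 4 * K * (\<Sum>l\<in>{j..<N}. f l - f (Suc l))" by (simp add: sum_distrib_left)
    also have "(\<Sum>l\<in>{j..<N}. f l - f (Suc l)) = f j - f N"
      using sum_Suc_diff'[OF that, of f] by (simp add: sum_subtractf)
    finally have s1: "(\<Sum>l\<in>{j..<N}. \<Delta> l) \<le> 4 * K * (f j - f N)" .
    have fN: "f N \<le> f j" "f N \<ge> 0" unfolding f_def using that by (auto simp: field_simps)
    have "h j \<le> f N + 4 * K * f j" unfolding h_def f_def[symmetric] using s1 fN K0
      by (smt (verit) mult_left_mono)
    also have "\<dots> \<le> (4 * K + 1) * f j" using fN by (simp add: algebra_simps)
    finally have "h j \<le> (4 * K + 1) * f j" .
    then have "h j * sqrt (real j + 1) \<le> (4 * K + 1) * f j * sqrt (real j + 1)"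
      by (intro mult_right_mono) auto
    also have "\<dots> = 4 * K + 1" unfolding f_def by simp
    finally show ?thesis .
  qed
  define z where "z j = T j / h j" for j
  have main: "(\<Sum>j<N. (real j + 1) * (real j + 2) * \<Delta> j * (T j / h j - T (Suc j) / h (Suc j)))
        = (\<Sum>j<N. d j * z j)"
  proof -
    have "(\<Sum>j<N. (real j + 1) * (real j + 2) * \<Delta> j * (T j / h j - T (Suc j) / h (Suc j)))
        = (\<Sum>j<N. gg (Suc j) * (z j - z (Suc j)))"
    proof (intro sum.cong refl)
      fix j
      have p: "(real j + 1) * (real j + 2) > 0" by simp
      have "(real j + 1) * (real j + 2) * \<Delta> j = gg (Suc j)" unfolding \<Delta>_def using p by simp
      then show "(real j + 1) * (real j + 2) * \<Delta> j * (T j / h j - T (Suc j) / h (Suc j)) = gg (Suc j) * (z j - z (Suc j))"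
        unfolding z_def by simp
    qed
    also have "\<dots> = (\<Sum>j<N. d j * z j) - gg N * z N" unfolding gg_def by (rule sbp)
    also have "z N = 0" unfolding z_def TN by simp
    finally show ?thesis by simp
  qed
  have "(\<Sum>j<N. \<mu> j * T j) \<le> (\<Sum>j<N. (4 * K + 1) * (d j * z j))"
  proof (rule sum_mono)
    fix j assume j: "j \<in> {..<N}"
    have sp: "sqrt (real j + 1) > 0" by simp
    have "\<mu> j * T j = (\<mu> j * T j / (h j * sqrt (real j + 1))) * (h j * sqrt (real j + 1))"
      using hpos[of j] sp by (simp add: field_simps)
    also have "\<dots> \<le> (\<mu> j * T j / (h j * sqrt (real j + 1))) * (4 * K + 1)"
      using hb[of j] j mu[of j] T[of j] hpos[of j] sp by (intro mult_left_mono) auto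
    also have "\<dots> = (4 * K + 1) * (d j * z j)" unfolding d_def z_def by (simp add: field_simps)
    finally show "\<mu> j * T j \<le> (4 * K + 1) * (d j * z j)" .
  qed
  also have "\<dots> = (4 * K + 1) * (\<Sum>j<N. d j * z j)" by (simp add: sum_distrib_left)
  finally show ?thesis using hpos hstep D0 main by (intro exI[of _ h] exI[of _ \<Delta>]) auto
qed

lemma super_edge:
  fixes c x y h1 h2 :: real
  assumes "c \<ge> 0" "h1 > 0" "h2 > 0"
  shows "c * (h1 - h2) * (x^2 / h1 - y^2 / h2) \<le> c * (y - x)^2"
proof -
  have "c * (y - x)^2 - c * (h1 - h2) * (x^2 / h1 - y^2 / h2) = c * (h1 * h2) * (x / h1 - y / h2)^2"
    using assms by (simp add: field_simps power2_eq_square)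
  moreover have "c * (h1 * h2) * (x / h1 - y / h2)^2 \<ge> 0" using assms by simp
  ultimately show ?thesis by linarith
qed

lemma mup_sq: assumes "b \<ge> 2" shows "(mup b j)^2 * real b ^ j \<le> 16 * (real j + 1)^2"
proof -
  have "(mup b j)^2 * real b ^ j = 4 * (aa b (Suc j))^2 * (real b * qq b ^ 2) ^ j"
    unfolding mup_def by (simp add: power_mult_distrib power_mult[symmetric] mult.commute mult.left_commute power2_eq_square)
  also have "\<dots> = 4 * (aa b (Suc j))^2" using qq_sq[OF assms] by simp
  also have "\<dots> \<le> 4 * (2 * (real j + 1))^2"
    using aa_upper[OF assms, of "Suc j"] aa_pos[OF assms, of "Suc j"] by (intro mult_left_mono power_mono) auto
  also have "\<dots> = 16 * (real j + 1)^2" by (simp add: power2_eq_square algebra_simps)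
  finally show ?thesis .
qed

lemma mlow_sq: assumes "b \<ge> 2"
  shows "(qq b)^2 * (sg b)^4 * (real j + 1)^2 \<le> (mlow b j)^2 * real b ^ j"
proof -
  have "(mlow b j)^2 * real b ^ j = (qq b)^2 * (aa b j)^2 * (sg b)^2 * (real b * qq b ^ 2) ^ j"
    unfolding mlow_def by (simp add: power_mult_distrib power_mult[symmetric] mult.commute mult.left_commute power2_eq_square)
  also have "\<dots> = (qq b)^2 * (aa b j)^2 * (sg b)^2" using qq_sq[OF assms] by simp
  finally have e: "(mlow b j)^2 * real b ^ j = (qq b)^2 * (sg b)^2 * (aa b j)^2" by simp
  have "(sg b)^2 * (real j + 1)^2 \<le> (aa b j)^2"
    using aa_lower[OF assms, of j] sg_bounds[OF assms] by (simp add: power_mult_distrib[symmetric] power_mono)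
  then have "(qq b)^2 * (sg b)^2 * ((sg b)^2 * (real j + 1)^2) \<le> (qq b)^2 * (sg b)^2 * (aa b j)^2"
    by (intro mult_left_mono) auto
  then show ?thesis unfolding e by (simp add: algebra_simps power2_eq_square power4_eq_xxxx)
qed

lemma ratio_sq: assumes "b \<ge> 2" shows "(mup b j / mlow b j)^2 \<le> 16 / ((qq b)^2 * (sg b)^2)"
proof -
  have q: "qq b > 0" and sgp: "sg b > 0" using qq_pos[OF assms] sg_bounds[OF assms] by auto
  have a: "aa b j \<ge> 1" "aa b (Suc j) \<le> 2 * aa b j" "aa b (Suc j) \<ge> 1" using aa_pos[OF assms] aa_Suc[OF assms] by auto
  have "mup b j / mlow b j = 2 * aa b (Suc j) / (qq b * aa b j * sg b)"
    unfolding mup_def mlow_def using q by (simp add: field_simps)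
  also have "\<dots> \<le> 2 * (2 * aa b j) / (qq b * aa b j * sg b)"
    using a q sgp by (intro divide_right_mono mult_left_mono) auto
  also have "\<dots> = 4 / (qq b * sg b)" using a q sgp by (simp add: field_simps)
  finally have r: "mup b j / mlow b j \<le> 4 / (qq b * sg b)" .
  have "0 \<le> mup b j / mlow b j" unfolding mup_def mlow_def using q sgp a by simp
  then have "(mup b j / mlow b j)^2 \<le> (4 / (qq b * sg b))^2" using r by (intro power_mono) auto
  then show ?thesis by (simp add: power_divide power_mult_distrib)
qed

definition Bw :: "nat \<Rightarrow> nat \<Rightarrow> (real \<Rightarrow> real) \<Rightarrow> real" where
  "Bw b j f = (mup b j)^2 * (2 * (f 0 / phi b j 0)^2 + 2 * (Iw b j f / (mlow b j)^2))"

lemma suff_real: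
  fixes \<Psi> :: "nat \<Rightarrow> real" and K :: real
  assumes b: "b \<ge> 2" and u: "tree_C0inf b u"
    and N: "\<forall>j\<ge>N. \<forall>w\<in>tree_edges b j. \<forall>s\<in>{0..1}. u w s = 0"
    and Psi: "\<And>j. \<Psi> j \<ge> 0" and K: "\<And>n. (\<Sum>j\<le>n. \<Psi> j * (real j + 1)^2) \<le> K * (real n + 1)"
  shows "(\<Sum>j<N. \<Psi> j * (\<Sum>w\<in>tree_edges b j. Bw b j (u w)))
      \<le> ((128 * K + 1) / ((qq b)^2 * (sg b)^4 / 2) + 32 * K / ((qq b)^2 * (sg b)^2)) * (\<Sum>j<N. \<Sum>w\<in>tree_edges b j. Iw b j (u w))"
proof -
  have sm: "smooth_on_unit (u w)" if "w \<in> tree_edges b j" for w j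
    using u that unfolding tree_C0inf_def by blast
  have cont: "u (w @ [k]) 0 = u w 1" if "w \<in> tree_edges b j" "k < b" for w j k
    using u that unfolding tree_C0inf_def by blast
  have q: "qq b > 0" and sgp: "sg b > 0" using qq_pos[OF b] sg_bounds[OF b] by auto
  define \<epsilon> where "\<epsilon> = (qq b)^2 * (sg b)^4 / 2"
  have ep: "\<epsilon> > 0" unfolding \<epsilon>_def using q sgp by simp
  have K0: "K \<ge> 0" using K[of 0] Psi[of 0] by simp
  have PsiK: "\<Psi> j \<le> K" for j
  proof -
    have "\<Psi> j * (real j + 1)^2 \<le> (\<Sum>i\<le>j. \<Psi> i * (real i + 1)^2)"
      using Psi by (intro member_le_sum) auto
    also have "\<dots> \<le> K * (real j + 1)" by (rule K)
    finally have "\<Psi> j * (real j + 1)^2 \<le> K * (real j + 1)" .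
    then have "\<Psi> j * (real j + 1) \<le> K" by (simp add: power2_eq_square mult.assoc[symmetric])
    moreover have "\<Psi> j \<le> \<Psi> j * (real j + 1)" using Psi[of j] by (simp add: algebra_simps)
    ultimately show ?thesis by linarith
  qed
  define E where "E j = (\<Sum>w\<in>tree_edges b j. Iw b j (u w))" for j
  have E0: "E j \<ge> 0" for j unfolding E_def using edge_bounds(3)[OF b sm] by (auto intro: sum_nonneg)
  define S where "S j = (\<Sum>w\<in>tree_edges b j. (u w 0 / phi b j 0)^2)" for j
  define T where "T j = S j / real b ^ j" for j
  have T0: "T j \<ge> 0" for j unfolding T_def S_def by (intro divide_nonneg_nonneg sum_nonneg) auto
  have TN: "T N = 0" unfolding T_def S_def using N by auto
  have Sy: "(\<Sum>w\<in>tree_edges b j. (u w 1 / phi b j 1)^2) = S (Suc j) / real b" for j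
  proof -
    have "S (Suc j) = (\<Sum>w\<in>tree_edges b j. \<Sum>k<b. (u (w @ [k]) 0 / phi b (Suc j) 0)^2)"
      unfolding S_def sum_tree_Suc ..
    also have "\<dots> = (\<Sum>w\<in>tree_edges b j. \<Sum>k<b. (u w 1 / phi b j 1)^2)"
      by (intro sum.cong refl) (simp add: cont phi_vertex)
    also have "\<dots> = real b * (\<Sum>w\<in>tree_edges b j. (u w 1 / phi b j 1)^2)" by (simp add: sum_distrib_left)
    finally show ?thesis using b by simp
  qed
  define \<mu> where "\<mu> j = 32 * \<Psi> j * (real j + 1)^2" for j
  have mu0: "\<mu> j \<ge> 0" for j unfolding \<mu>_def using Psi by simp
  have muK: "(\<Sum>i\<le>n. \<mu> i) \<le> (32 * K) * (real n + 1)" for n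
    unfolding \<mu>_def using K[of n] by (simp add: sum_distrib_left[symmetric] mult.assoc)
  obtain h \<Delta> where hpos: "\<forall>j. h j > 0" and hstep: "\<forall>j<N. h j - h (Suc j) = \<Delta> j" and D0: "\<forall>j. \<Delta> j \<ge> 0"
    and hardy: "(\<Sum>j<N. \<mu> j * T j) \<le> (4 * (32 * K) + 1) * (\<Sum>j<N. (real j + 1) * (real j + 2) * \<Delta> j * (T j / h j - T (Suc j) / h (Suc j)))"
    using hardy_discrete[of \<mu> "32 * K" T N, OF mu0 muK T0 TN] by blast
  have genE: "\<epsilon> * ((real j + 1) * (real j + 2) * \<Delta> j * (T j / h j - T (Suc j) / h (Suc j))) \<le> E j" if j: "j < N" for j
  proof -
    define c where "c = \<epsilon> * (real j + 1) * (real j + 2) / real b ^ j"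
    have c0: "c \<ge> 0" unfolding c_def using ep by simp
    have cm: "c \<le> (mlow b j)^2"
    proof -
      have "\<epsilon> * (real j + 1) * (real j + 2) \<le> (qq b)^2 * (sg b)^4 * (real j + 1)^2"
        unfolding \<epsilon>_def using q sgp by (simp add: power2_eq_square algebra_simps)
      also have "\<dots> \<le> (mlow b j)^2 * real b ^ j" by (rule mlow_sq[OF b])
      finally show ?thesis unfolding c_def using b by (simp add: divide_le_eq)
    qed
    have "c * (h j - h (Suc j)) * (S j / h j - (S (Suc j) / real b) / h (Suc j))
        = (\<Sum>w\<in>tree_edges b j. c * (h j - h (Suc j)) * ((u w 0 / phi b j 0)^2 / h j - (u w 1 / phi b j 1)^2 / h (Suc j)))"
      unfolding Sy[symmetric] unfolding S_def
      by (simp only: sum_distrib_left[symmetric] sum_subtractf sum_divide_distrib)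
    also have "\<dots> \<le> (\<Sum>w\<in>tree_edges b j. c * ((u w 1 / phi b j 1) - (u w 0 / phi b j 0))^2)"
      using c0 hpos by (intro sum_mono super_edge) auto
    also have "\<dots> \<le> (\<Sum>w\<in>tree_edges b j. Iw b j (u w))"
    proof (rule sum_mono)
      fix w assume w: "w \<in> tree_edges b j"
      have "c * ((u w 1 / phi b j 1) - (u w 0 / phi b j 0))^2 \<le> (mlow b j)^2 * ((u w 1 / phi b j 1) - (u w 0 / phi b j 0))^2"
        using cm by (intro mult_right_mono) auto
      also have "\<dots> \<le> (mlow b j)^2 * (Iw b j (u w) / (mlow b j)^2)"
        using edge_bounds(1)[OF b sm[OF w], of j] by (intro mult_left_mono) auto
      also have "\<dots> = Iw b j (u w)" using mlow_pos[OF b, of j] by simp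
      finally show "c * ((u w 1 / phi b j 1) - (u w 0 / phi b j 0))^2 \<le> Iw b j (u w)" .
    qed
    finally have "c * (h j - h (Suc j)) * (S j / h j - (S (Suc j) / real b) / h (Suc j)) \<le> E j" unfolding E_def .
    moreover have "c * (h j - h (Suc j)) * (S j / h j - (S (Suc j) / real b) / h (Suc j))
       = \<epsilon> * ((real j + 1) * (real j + 2) * \<Delta> j * (T j / h j - T (Suc j) / h (Suc j)))"
    proof -
      have bp: "real b ^ j > 0" "real b > 0" using b by auto
      have hp: "h j > 0" "h (Suc j) > 0" using hpos by auto
      show ?thesis
        unfolding c_def T_def hstep[rule_format, OF j] using bp hp by (simp add: field_simps)
    qed
    ultimately show ?thesis by simp
  qed
  have part1: "(\<Sum>j<N. \<mu> j * T j) \<le> (128 * K + 1) / \<epsilon> * (\<Sum>j<N. E j)"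
  proof -
    have "(\<Sum>j<N. (real j + 1) * (real j + 2) * \<Delta> j * (T j / h j - T (Suc j) / h (Suc j))) \<le> (\<Sum>j<N. E j / \<epsilon>)"
      using genE ep by (intro sum_mono) (simp add: field_simps)
    also have "\<dots> = (\<Sum>j<N. E j) / \<epsilon>" by (simp add: sum_divide_distrib)
    finally have "(4 * (32 * K) + 1) * (\<Sum>j<N. (real j + 1) * (real j + 2) * \<Delta> j * (T j / h j - T (Suc j) / h (Suc j)))
        \<le> (4 * (32 * K) + 1) * ((\<Sum>j<N. E j) / \<epsilon>)" using K0 by (intro mult_left_mono) auto
    then show ?thesis using hardy by simp
  qed
  have lhs: "\<Psi> j * (\<Sum>w\<in>tree_edges b j. Bw b j (u w)) \<le> \<mu> j * T j + 32 * K / ((qq b)^2 * (sg b)^2) * E j" for j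
  proof -
    have "\<Psi> j * (\<Sum>w\<in>tree_edges b j. Bw b j (u w))
        = 2 * \<Psi> j * (mup b j)^2 * S j + 2 * \<Psi> j * (mup b j / mlow b j)^2 * E j"
      unfolding Bw_def S_def E_def by (simp add: sum_distrib_left sum.distrib algebra_simps power_divide sum_divide_distrib)
    also have "2 * \<Psi> j * (mup b j)^2 * S j \<le> \<mu> j * T j"
    proof -
      have "2 * \<Psi> j * (mup b j)^2 * S j = 2 * \<Psi> j * T j * ((mup b j)^2 * real b ^ j)"
        unfolding T_def using b by simp
      also have "\<dots> \<le> 2 * \<Psi> j * T j * (16 * (real j + 1)^2)"
        using Psi[of j] T0[of j] mup_sq[OF b] by (intro mult_left_mono) auto
      also have "\<dots> = \<mu> j * T j" unfolding \<mu>_def by simp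
      finally show ?thesis .
    qed
    also have "2 * \<Psi> j * (mup b j / mlow b j)^2 * E j \<le> 2 * K * (16 / ((qq b)^2 * (sg b)^2)) * E j"
      using PsiK[of j] Psi[of j] ratio_sq[OF b, of j] E0[of j]
      by (intro mult_right_mono mult_mono) auto
    finally show ?thesis by simp
  qed
  have "(\<Sum>j<N. \<Psi> j * (\<Sum>w\<in>tree_edges b j. Bw b j (u w))) \<le> (\<Sum>j<N. \<mu> j * T j + 32 * K / ((qq b)^2 * (sg b)^2) * E j)"
    by (intro sum_mono lhs)
  also have "\<dots> = (\<Sum>j<N. \<mu> j * T j) + 32 * K / ((qq b)^2 * (sg b)^2) * (\<Sum>j<N. E j)"
    by (simp add: sum.distrib sum_distrib_left)
  also have "\<dots> \<le> (128 * K + 1) / \<epsilon> * (\<Sum>j<N. E j) + 32 * K / ((qq b)^2 * (sg b)^2) * (\<Sum>j<N. E j)"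
    using part1 by simp
  finally show ?thesis unfolding E_def \<epsilon>_def by (simp add: algebra_simps)
qed

lemma shift_int:
  fixes G :: "real \<Rightarrow> ennreal" and j :: nat
  assumes G: "G \<in> borel_measurable borel"
  shows "(\<integral>\<^sup>+s\<in>{0..1}. G (real j + s) \<partial>lborel) = (\<integral>\<^sup>+t\<in>{real j..<real j + 1}. G t \<partial>lborel)"
proof -
  have "(\<integral>\<^sup>+s\<in>{0..1}. G (real j + s) \<partial>lborel) = (\<integral>\<^sup>+s. G (real j + s) * indicator {0..<1} s \<partial>lborel)"
  proof (rule nn_integral_cong_AE)
    show "AE s in lborel. G (real j + s) * indicator {0..1} s = G (real j + s) * indicator {0..<1} s"
      using AE_lborel_singleton[of "1::real"] by eventually_elim (auto simp: indicator_def)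
  qed
  also have "\<dots> = (\<integral>\<^sup>+s. G (real j + 1 * s) * indicator {real j..<real j + 1} (real j + 1 * s) \<partial>lborel)"
    by (intro nn_integral_cong) (auto simp: indicator_def)
  also have "\<dots> = (\<integral>\<^sup>+t. G t * indicator {real j..<real j + 1} t \<partial>lborel)"
    using nn_integral_real_affine[of "\<lambda>t. G t * indicator {real j..<real j + 1} t" 1 "real j"] G
    by simp
  finally show ?thesis .
qed

lemma ind_sum:
  fixes t :: real
  shows "(\<Sum>j<n. indicator {real j..<real j + 1} t :: ennreal) = indicator {0..<real n} t"
proof (cases "0 \<le> t \<and> t < real n")
  case True
  define m where "m = nat \<lfloor>t\<rfloor>"
  have m: "real m \<le> t" "t < real m + 1" unfolding m_def using True by linarith+
  have mn: "m < n" using m True by linarith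
  have iff: "t \<in> {real j..<real j + 1} \<longleftrightarrow> j = m" for j
  proof
    assume "t \<in> {real j..<real j + 1}"
    then have "real j \<le> t" "t < real j + 1" by auto
    then show "j = m" using m by linarith
  qed (use m in auto)
  have "(\<Sum>j<n. indicator {real j..<real j + 1} t :: ennreal) = (\<Sum>j<n. if j = m then 1 else 0)"
  proof (intro sum.cong refl)
    fix j show "indicator {real j..<real j + 1} t = (if j = m then 1 else 0 :: ennreal)"
      using iff[of j] unfolding indicator_def by auto
  qed
  also have "\<dots> = 1" using mn by simp
  finally show ?thesis using True by simp
next
  case False
  have "indicator {real j..<real j + 1} t = (0::ennreal)" if "j < n" for j
    using False that by (auto simp: indicator_def) linarith?
  then have "(\<Sum>j<n. indicator {real j..<real j + 1} t :: ennreal) = 0" by simp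
  then show ?thesis using False by (simp add: indicator_def)
qed

lemma split_int:
  fixes G :: "real \<Rightarrow> ennreal"
  assumes G: "G \<in> borel_measurable borel"
  shows "(\<Sum>j<n. \<integral>\<^sup>+t\<in>{real j..<real j + 1}. G t \<partial>lborel) = (\<integral>\<^sup>+t\<in>{0..<real n}. G t \<partial>lborel)"
proof -
  have "(\<Sum>j<n. \<integral>\<^sup>+t\<in>{real j..<real j + 1}. G t \<partial>lborel) = (\<integral>\<^sup>+t. (\<Sum>j<n. G t * indicator {real j..<real j + 1} t) \<partial>lborel)"
    using G by (intro nn_integral_sum[symmetric]) auto
  also have "\<dots> = (\<integral>\<^sup>+t\<in>{0..<real n}. G t \<partial>lborel)"
    by (intro nn_integral_cong) (simp add: sum_distrib_left[symmetric] ind_sum)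
  finally show ?thesis .
qed

lemma sufficiency:
  fixes b :: nat and \<psi> :: "real \<Rightarrow> real"
  assumes b: "b \<ge> 2"
    and meas: "set_borel_measurable lborel {0..} \<psi>"
    and pos: "\<forall>t\<ge>0. \<psi> t \<ge> 0"
    and sup: "(SUP r\<in>{0<..}. ennreal (1 / (1 + r)) *
                (\<integral>\<^sup>+ t\<in>{0..r}. ennreal (\<psi> t * (1 + t)\<^sup>2) \<partial>lborel)) < \<infinity>"
  shows "\<exists>C::real. \<forall>u. tree_C0inf b u \<longrightarrow>
            enn2ereal (tree_nn_integral b (\<lambda>w s. ennreal (\<psi> (real (length w) + s) * (u w s)\<^sup>2)))
              \<le> ereal (C * tree_integral b (\<lambda>w s. (deriv (u w) s)\<^sup>2 - lambda_b b * (u w s)\<^sup>2))"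
proof -
  define S where "S = (SUP r\<in>{0<..}. ennreal (1 / (1 + r)) *
                (\<integral>\<^sup>+ t\<in>{0..r}. ennreal (\<psi> t * (1 + t)\<^sup>2) \<partial>lborel))"
  define I where "I r = (\<integral>\<^sup>+ t\<in>{0..r}. ennreal (\<psi> t * (1 + t)\<^sup>2) \<partial>lborel)" for r :: real
  define \<psi>0 where "\<psi>0 x = indicator {0..} x *\<^sub>R \<psi> x" for x :: real
  have m0: "\<psi>0 \<in> borel_measurable borel" using meas unfolding set_borel_measurable_def \<psi>0_def by simp
  have p0: "\<psi>0 x \<ge> 0" for x unfolding \<psi>0_def using pos by (auto simp: indicator_def)
  have e0: "\<psi>0 x = \<psi> x" if "x \<ge> 0" for x unfolding \<psi>0_def using that by simp
  have Sfin: "S < \<infinity>" using sup unfolding S_def .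
  have IS: "I r \<le> ennreal (1 + r) * S" if r: "r > 0" for r
  proof -
    have "ennreal (1 / (1 + r)) * I r \<le> S" unfolding S_def I_def using r by (intro SUP_upper) auto
    then have "ennreal (1 + r) * (ennreal (1 / (1 + r)) * I r) \<le> ennreal (1 + r) * S"
      by (intro mult_left_mono) auto
    moreover have "ennreal (1 + r) * ennreal (1 / (1 + r)) = 1"
    proof -
      have "ennreal (1 + r) * ennreal (1 / (1 + r)) = ennreal ((1 + r) * (1 / (1 + r)))"
        using r by (subst ennreal_mult) auto
      also have "(1 + r) * (1 / (1 + r)) = 1" using r by simp
      finally show ?thesis by simp
    qed
    ultimately show ?thesis by (simp add: mult.assoc[symmetric])
  qed
  define W where "W j = (\<integral>\<^sup>+s\<in>{0..1}. ennreal (\<psi>0 (real j + s)) \<partial>lborel)" for j :: nat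
  have Wsum: "(\<Sum>j<Suc n. W j * ennreal ((real j + 1)^2)) \<le> I (real n + 1)" for n
  proof -
    have "W j * ennreal ((real j + 1)^2) \<le> (\<integral>\<^sup>+t\<in>{real j..<real j + 1}. ennreal (\<psi>0 t * (1 + t)^2) \<partial>lborel)" for j
    proof -
      have "W j * ennreal ((real j + 1)^2) = (\<integral>\<^sup>+t\<in>{real j..<real j + 1}. ennreal (\<psi>0 t) \<partial>lborel) * ennreal ((real j + 1)^2)"
        unfolding W_def using m0 by (subst shift_int[where G = "\<lambda>t. ennreal (\<psi>0 t)"]) auto
      also have "\<dots> = (\<integral>\<^sup>+t. ennreal (\<psi>0 t) * indicator {real j..<real j + 1} t * ennreal ((real j + 1)^2) \<partial>lborel)"
        using m0 by (intro nn_integral_multc[symmetric]) auto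
      also have "\<dots> \<le> (\<integral>\<^sup>+t\<in>{real j..<real j + 1}. ennreal (\<psi>0 t * (1 + t)^2) \<partial>lborel)"
      proof (intro nn_integral_mono)
        fix t :: real
        show "ennreal (\<psi>0 t) * indicator {real j..<real j + 1} t * ennreal ((real j + 1)^2)
          \<le> ennreal (\<psi>0 t * (1 + t)^2) * indicator {real j..<real j + 1} t"
        proof (cases "t \<in> {real j..<real j + 1}")
          case True
          then have "(real j + 1)^2 \<le> (1 + t)^2" by (intro power_mono) auto
          then have "\<psi>0 t * (real j + 1)^2 \<le> \<psi>0 t * (1 + t)^2" using p0 by (intro mult_left_mono) auto
          then show ?thesis using True p0[of t] by (simp add: ennreal_mult[symmetric])
        qed simp
      qed
      finally show ?thesis .
    qed
    then have "(\<Sum>j<Suc n. W j * ennreal ((real j + 1)^2)) \<le> (\<Sum>j<Suc n. \<integral>\<^sup>+t\<in>{real j..<real j + 1}. ennreal (\<psi>0 t * (1 + t)^2) \<partial>lborel)"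
      by (intro sum_mono)
    also have "\<dots> = (\<integral>\<^sup>+t\<in>{0..<real (Suc n)}. ennreal (\<psi>0 t * (1 + t)^2) \<partial>lborel)"
      using m0 by (intro split_int) auto
    also have "\<dots> \<le> I (real n + 1)" unfolding I_def
      by (intro nn_integral_mono) (auto simp: indicator_def e0)
    finally show ?thesis .
  qed
  define K0 where "K0 = enn2real S"
  have K0p: "K0 \<ge> 0" unfolding K0_def by simp
  have SK: "S = ennreal K0" unfolding K0_def using Sfin by simp
  have Wfin: "W j < \<infinity>" for j
  proof -
    have "W j \<le> W j * ennreal ((real j + 1)^2)"
    proof -
      have "1 \<le> ennreal ((real j + 1)^2)" by (simp add: one_le_power)
      then show ?thesis using mult_left_mono[of 1 "ennreal ((real j + 1)^2)" "W j"] by simp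
    qed
    also have "\<dots> \<le> (\<Sum>j'<Suc j. W j' * ennreal ((real j' + 1)^2))" by (intro member_le_sum) auto
    also have "\<dots> \<le> I (real j + 1)" by (rule Wsum)
    also have "\<dots> \<le> ennreal (1 + (real j + 1)) * S" by (intro IS) auto
    also have "\<dots> < \<infinity>"
    proof -
      have "ennreal (1 + (real j + 1)) * ennreal K0 = ennreal ((1 + (real j + 1)) * K0)"
        by (rule ennreal_mult[symmetric]) (auto simp: K0p)
      then show ?thesis unfolding SK by (simp only: ennreal_less_top infinity_ennreal_def)
    qed
    finally show ?thesis .
  qed
  define \<Psi> where "\<Psi> j = enn2real (W j)" for j
  have WP: "W j = ennreal (\<Psi> j)" for j unfolding \<Psi>_def using Wfin by simp
  have Psi0: "\<Psi> j \<ge> 0" for j unfolding \<Psi>_def by simp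
  have PsiK: "(\<Sum>j\<le>n. \<Psi> j * (real j + 1)^2) \<le> (2 * K0) * (real n + 1)" for n
  proof -
    have "ennreal (\<Sum>j\<le>n. \<Psi> j * (real j + 1)^2) = (\<Sum>j<Suc n. W j * ennreal ((real j + 1)^2))"
      unfolding WP using Psi0 by (simp add: lessThan_Suc_atMost ennreal_mult[symmetric])
    also have "\<dots> \<le> ennreal (1 + (real n + 1)) * S" using Wsum[of n] IS[of "real n + 1"] by auto
    also have "\<dots> = ennreal ((real n + 2) * K0)" unfolding SK
    proof -
      have e: "(1 + (real n + 1)) = real n + 2" by simp
      show "ennreal (1 + (real n + 1)) * ennreal K0 = ennreal ((real n + 2) * K0)"
        unfolding e by (rule ennreal_mult[symmetric]) (auto simp: K0p)
    qed
    finally have "(\<Sum>j\<le>n. \<Psi> j * (real j + 1)^2) \<le> (real n + 2) * K0" using K0p by (simp add: ennreal_le_iff2) (smt (verit) mult_nonneg_nonneg of_nat_0_le_iff)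
    also have "\<dots> \<le> (2 * K0) * (real n + 1)" using K0p by (simp add: algebra_simps)
    finally show ?thesis .
  qed
  define C where "C = (128 * (2 * K0) + 1) / ((qq b)^2 * (sg b)^4 / 2) + 32 * (2 * K0) / ((qq b)^2 * (sg b)^2)"
  have C0: "C \<ge> 0" unfolding C_def using K0p qq_pos[OF b] sg_bounds[OF b] by simp
  show ?thesis
  proof (intro exI[of _ C] allI impI)
    fix u assume u: "tree_C0inf b u"
    obtain N where N: "\<forall>j\<ge>N. \<forall>w\<in>tree_edges b j. \<forall>s\<in>{0..1}. u w s = 0"
      using u unfolding tree_C0inf_def by blast
    have sm: "smooth_on_unit (u w)" if "w \<in> tree_edges b j" for w j
      using u that unfolding tree_C0inf_def by blast
    have lenw: "length w = j" if "w \<in> tree_edges b j" for w j using that by (simp add: tree_edges_def)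
    define Q where "Q = tree_integral b (\<lambda>w s. (deriv (u w) s)\<^sup>2 - lambda_b b * (u w s)\<^sup>2)"
    have Qeq: "Q = (\<Sum>j<N. \<Sum>w\<in>tree_edges b j. Iw b j (u w))" unfolding Q_def by (rule Q_identity[OF b u N])
    have Q0: "Q \<ge> 0" unfolding Qeq using edge_bounds(3)[OF b sm] by (auto intro!: sum_nonneg)
    have real_bd: "(\<Sum>j<N. \<Psi> j * (\<Sum>w\<in>tree_edges b j. Bw b j (u w))) \<le> C * Q"
      unfolding Qeq C_def by (rule suff_real[OF b u N Psi0 PsiK])
    have Bw0: "Bw b j (u w) \<ge> 0" if "w \<in> tree_edges b j" for w j
      using edge_bounds(3)[OF b sm[OF that]] mlow_pos[OF b, of j] unfolding Bw_def by simp
    define F where "F w s = ennreal (\<psi> (real (length w) + s) * (u w s)\<^sup>2)" for w s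
    have edge: "(\<integral>\<^sup>+s\<in>{0..1}. F w s \<partial>lborel) \<le> ennreal (\<Psi> j * Bw b j (u w))" if w: "w \<in> tree_edges b j" for w j
    proof -
      have "(\<integral>\<^sup>+s\<in>{0..1}. F w s \<partial>lborel) \<le> (\<integral>\<^sup>+s. ennreal (\<psi>0 (real j + s)) * indicator {0..1} s * ennreal (Bw b j (u w)) \<partial>lborel)"
      proof (intro nn_integral_mono)
        fix s :: real
        show "F w s * indicator {0..1} s \<le> ennreal (\<psi>0 (real j + s)) * indicator {0..1} s * ennreal (Bw b j (u w))"
        proof (cases "s \<in> {0..1}")
          case True
          have us: "(u w s)^2 \<le> Bw b j (u w)" unfolding Bw_def using edge_bounds(2)[OF b sm[OF w] True] .
          have "\<psi> (real j + s) * (u w s)^2 \<le> \<psi>0 (real j + s) * Bw b j (u w)"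
          proof -
            have e: "\<psi> (real j + s) = \<psi>0 (real j + s)" using e0[of "real j + s"] True by simp
            show ?thesis unfolding e using p0[of "real j + s"] us by (intro mult_left_mono) auto
          qed
          then show ?thesis using True lenw[OF w] p0[of "real j + s"] Bw0[OF w] unfolding F_def
            by (simp add: ennreal_mult[symmetric])
        qed simp
      qed
      also have "\<dots> = W j * ennreal (Bw b j (u w))" unfolding W_def
        using m0 by (intro nn_integral_multc) auto
      also have "\<dots> = ennreal (\<Psi> j * Bw b j (u w))" unfolding WP using Psi0[of j] Bw0[OF w] by (simp add: ennreal_mult)
      finally show ?thesis .
    qed
    have zero: "(\<Sum>w\<in>tree_edges b j. \<integral>\<^sup>+s\<in>{0..1}. F w s \<partial>lborel) = 0" if j: "j \<notin> {..<N}" for j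
    proof (intro sum.neutral ballI)
      fix w assume w: "w \<in> tree_edges b j"
      have "(\<integral>\<^sup>+s\<in>{0..1}. F w s \<partial>lborel) = (\<integral>\<^sup>+(s::real). 0 \<partial>lborel)"
      proof (rule nn_integral_cong)
        fix x :: real
        have jN: "j \<ge> N" using j by simp
        have "u w x = 0" if "x \<in> {0..1}" using N jN w that by blast
        then show "F w x * indicator {0..1} x = 0" unfolding F_def by (auto simp: indicator_def)
      qed
      then show "(\<integral>\<^sup>+s\<in>{0..1}. F w s \<partial>lborel) = 0" by simp
    qed
    have "tree_nn_integral b F = (\<Sum>j<N. \<Sum>w\<in>tree_edges b j. \<integral>\<^sup>+s\<in>{0..1}. F w s \<partial>lborel)"
      unfolding tree_nn_integral_def by (rule suminf_finite) (use zero in auto)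
    also have "\<dots> \<le> (\<Sum>j<N. \<Sum>w\<in>tree_edges b j. ennreal (\<Psi> j * Bw b j (u w)))"
      by (intro sum_mono edge)
    also have "\<dots> = ennreal (\<Sum>j<N. \<Psi> j * (\<Sum>w\<in>tree_edges b j. Bw b j (u w)))"
      using Psi0 Bw0 by (simp add: sum_distrib_left sum_nonneg)
    also have "\<dots> \<le> ennreal (C * Q)" using real_bd by (rule ennreal_leI)
    finally have "tree_nn_integral b F \<le> ennreal (C * Q)" .
    then have "enn2ereal (tree_nn_integral b F) \<le> enn2ereal (ennreal (C * Q))"
      by (simp add: less_eq_ennreal.rep_eq)
    also have "\<dots> = ereal (C * Q)" using C0 Q0 by simp
    finally show "enn2ereal (tree_nn_integral b (\<lambda>w s. ennreal (\<psi> (real (length w) + s) * (u w s)\<^sup>2)))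
              \<le> ereal (C * tree_integral b (\<lambda>w s. (deriv (u w) s)\<^sup>2 - lambda_b b * (u w s)\<^sup>2))"
      unfolding F_def Q_def .
  qed
qed

definition fam :: "real \<Rightarrow> real \<times> real \<times> real \<times> real \<Rightarrow> real \<Rightarrow> real" where
  "fam k c s = (case c of (A, B, C, D) \<Rightarrow> (A + B * s) * sin (k * s) + (C + D * s) * cos (k * s))"

definition dstep :: "real \<Rightarrow> real \<times> real \<times> real \<times> real \<Rightarrow> real \<times> real \<times> real \<times> real" where
  "dstep k c = (case c of (A, B, C, D) \<Rightarrow> (B - k * C, - k * D, k * A + D, k * B))"

lemma fam_deriv: "(fam k c has_real_derivative fam k (dstep k c) x) (at x within S)"
proof -
  obtain A B C D where c: "c = (A, B, C, D)" by (cases c) auto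
  show ?thesis unfolding c fam_def dstep_def
    by (auto intro!: derivative_eq_intros simp: algebra_simps)
qed

lemma fam_smooth: "smooth_on_unit (fam k c)"
  unfolding smooth_on_unit_def
  by (intro exI[of _ "\<lambda>n. fam k ((dstep k ^^ n) c)"]) (auto intro: fam_deriv)

lemma phi_lin_fam:
  "phi b j s * (\<alpha> + \<beta> * s) = fam (kk b)
     (qq b ^ j * (qq b * aa b (Suc j) - aa b j * cos (kk b)) * \<alpha>,
      qq b ^ j * (qq b * aa b (Suc j) - aa b j * cos (kk b)) * \<beta>,
      qq b ^ j * aa b j * sin (kk b) * \<alpha>, qq b ^ j * aa b j * sin (kk b) * \<beta>) s"
proof -
  have e: "sin (kk b * (1 - s)) = sin (kk b) * cos (kk b * s) - cos (kk b) * sin (kk b * s)"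
    using sin_diff[of "kk b" "kk b * s"] by (simp add: right_diff_distrib)
  show ?thesis unfolding phi_def fam_def e by (simp only: prod.case) algebra
qed

lemma phi_lin_smooth: "smooth_on_unit (\<lambda>s. phi b j s * (\<alpha> + \<beta> * s))"
  unfolding phi_lin_fam by (rule fam_smooth)

definition Vt :: "nat \<Rightarrow> nat \<Rightarrow> real" where
  "Vt n j = (if j \<le> n then 1 else if j \<le> 2 * n + 1 then (real (2 * n + 1) - real j) / (real n + 1) else 0)"

definition ut :: "nat \<Rightarrow> nat \<Rightarrow> nat list \<Rightarrow> real \<Rightarrow> real" where
  "ut b n w s = phi b (length w) s * (Vt n (length w) + (Vt n (Suc (length w)) - Vt n (length w)) * s)"

lemma Vt_diff: "\<bar>Vt n (Suc j) - Vt n j\<bar> \<le> 1 / (real n + 1)"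
proof -
  consider "Suc j \<le> n" | "j = n" | "n < j" "Suc j \<le> 2 * n + 1" | "j = 2 * n + 1" | "j > 2 * n + 1" by linarith
  then show ?thesis
  proof cases
    case 1 then show ?thesis unfolding Vt_def by simp
  next
    case 2 then show ?thesis unfolding Vt_def by (simp add: field_simps)
  next
    case 3
    have a: "Vt n j = (real (2 * n + 1) - real j) / (real n + 1)" unfolding Vt_def using 3 by simp
    have b: "Vt n (Suc j) = (real (2 * n + 1) - real (Suc j)) / (real n + 1)" unfolding Vt_def using 3 by simp
    have "Vt n (Suc j) - Vt n j = ((real (2 * n + 1) - real (Suc j)) - (real (2 * n + 1) - real j)) / (real n + 1)"
      unfolding a b by (simp only: diff_divide_distrib)
    moreover
    have c: "(real (2 * n + 1) - real (Suc j)) - (real (2 * n + 1) - real j) = -1" by simp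
    ultimately have "Vt n (Suc j) - Vt n j = - 1 / (real n + 1)" by simp
    then show ?thesis by simp
  next
    case 4 then show ?thesis unfolding Vt_def by simp
  next
    case 5 then show ?thesis unfolding Vt_def by simp
  qed
qed

lemma Vt_one: "j < n \<Longrightarrow> Vt n j = 1 \<and> Vt n (Suc j) = 1"
  unfolding Vt_def by simp

lemma Vt_zero: "j \<ge> 2 * n + 1 \<Longrightarrow> Vt n j = 0"
  unfolding Vt_def by auto

lemma ut_C0inf: assumes b: "b \<ge> 2" shows "tree_C0inf b (ut b n)"
  unfolding tree_C0inf_def
proof (intro conjI allI ballI impI)
  fix j w assume w: "w \<in> tree_edges b j"
  show "smooth_on_unit (ut b n w)"
    unfolding ut_def by (rule phi_lin_smooth)
next
  fix j w k assume w: "w \<in> tree_edges b j" and k: "k < b"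
  show "ut b n (w @ [k]) 0 = ut b n w 1" unfolding ut_def by (simp add: phi_vertex)
next
  show "\<exists>N. \<forall>j\<ge>N. \<forall>w\<in>tree_edges b j. \<forall>s\<in>{0..1}. ut b n w s = 0"
  proof (intro exI[of _ "2 * n + 1"] allI impI ballI)
    fix j w and s :: real assume "2 * n + 1 \<le> j" "w \<in> tree_edges b j" "s \<in> {0..1}"
    then show "ut b n w s = 0" unfolding ut_def by (simp add: tree_edges_def Vt_zero)
  qed
qed

lemma ut_Iw: assumes b: "b \<ge> 2" and w: "w \<in> tree_edges b j"
  shows "Iw b j (ut b n w) \<le> (mup b j)^2 * (1 / (real n + 1))^2"
proof -
  have lw: "length w = j" using w by (simp add: tree_edges_def)
  define d where "d = Vt n (Suc j) - Vt n j"
  have u: "ut b n w = (\<lambda>s. phi b j s * (Vt n j + d * s))" unfolding ut_def lw d_def by simp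
  have de: "deriv (ut b n w) s = dphi b j s * (Vt n j + d * s) + phi b j s * d" for s
    unfolding u by (rule DERIV_imp_deriv) (auto intro!: derivative_eq_intros phi_deriv)
  have eq: "(deriv (ut b n w) s - rho b j s * ut b n w s)^2 = (phi b j s * d)^2" if s: "s \<in> {0..1}" for s
  proof -
    have "phi b j s \<noteq> 0" using phi_pos[OF b, of s j] s by auto
    then show ?thesis unfolding de unfolding rho_def u by (simp add: field_simps)
  qed
  have "Iw b j (ut b n w) = integral {0..1} (\<lambda>s. (phi b j s * d)^2)"
    unfolding Iw_def by (rule integral_cong) (use eq in auto)
  also have "\<dots> \<le> integral {0..1} (\<lambda>s::real. (mup b j)^2 * (1 / (real n + 1))^2)"
  proof -
    have i1: "(\<lambda>s. (phi b j s * d)^2) integrable_on {0..1::real}"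
      by (intro integrable_continuous_interval continuous_intros phi_cont)
    have i2: "(\<lambda>s::real. (mup b j)^2 * (1 / (real n + 1))^2) integrable_on {0..1::real}"
      by (intro integrable_continuous_interval continuous_on_const)
    have pw: "(phi b j s * d)^2 \<le> (mup b j)^2 * (1 / (real n + 1))^2" if s: "s \<in> {0..1::real}" for s
    proof -
      have "\<bar>phi b j s * d\<bar> \<le> mup b j * (1 / (real n + 1))"
        unfolding abs_mult using phi_upper[OF b, of s j] phi_pos[OF b, of s j] s Vt_diff[of n j]
          aa_pos[OF b, of "Suc j"] qq_pos[OF b]
        unfolding d_def mup_def by (intro mult_mono) auto
      then have "\<bar>phi b j s * d\<bar>^2 \<le> (mup b j * (1 / (real n + 1)))^2" by (intro power_mono) auto
      then show ?thesis by (simp add: power_mult_distrib power_divide)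
    qed
    show ?thesis using integral_le[OF i1 i2 pw] by simp
  qed
  also have "\<dots> = (mup b j)^2 * (1 / (real n + 1))^2" by simp
  finally show ?thesis .
qed

lemma ut_Q: assumes b: "b \<ge> 2"
  shows "tree_integral b (\<lambda>w s. (deriv (ut b n w) s)\<^sup>2 - lambda_b b * (ut b n w s)\<^sup>2) \<le> 128 * (real n + 1)"
    and "tree_integral b (\<lambda>w s. (deriv (ut b n w) s)\<^sup>2 - lambda_b b * (ut b n w s)\<^sup>2) \<ge> 0"
proof -
  define N where "N = 2 * n + 2"
  have Nz: "\<forall>j\<ge>N. \<forall>w\<in>tree_edges b j. \<forall>s\<in>{0..1}. ut b n w s = 0"
    unfolding N_def ut_def by (auto simp: tree_edges_def Vt_zero)
  have Qe: "tree_integral b (\<lambda>w s. (deriv (ut b n w) s)\<^sup>2 - lambda_b b * (ut b n w s)\<^sup>2)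
      = (\<Sum>j<N. \<Sum>w\<in>tree_edges b j. Iw b j (ut b n w))"
    by (rule Q_identity[OF b ut_C0inf[OF b] Nz])
  have sm: "smooth_on_unit (ut b n w)" if "w \<in> tree_edges b j" for w j
    using ut_C0inf[OF b] that unfolding tree_C0inf_def by blast
  show "tree_integral b (\<lambda>w s. (deriv (ut b n w) s)\<^sup>2 - lambda_b b * (ut b n w s)\<^sup>2) \<ge> 0"
    unfolding Qe using edge_bounds(3)[OF b sm] by (auto intro!: sum_nonneg)
  have gen: "(\<Sum>w\<in>tree_edges b j. Iw b j (ut b n w)) \<le> 64" if j: "j < N" for j
  proof -
    have "(\<Sum>w\<in>tree_edges b j. Iw b j (ut b n w)) \<le> (\<Sum>w\<in>tree_edges b j. (mup b j)^2 * (1 / (real n + 1))^2)"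
      by (intro sum_mono ut_Iw[OF b])
    also have "\<dots> = ((mup b j)^2 * real b ^ j) * (1 / (real n + 1))^2" by (simp add: card_tree_edges)
    also have "\<dots> \<le> (16 * (real j + 1)^2) * (1 / (real n + 1))^2"
      by (intro mult_right_mono mup_sq[OF b]) auto
    also have "\<dots> \<le> (16 * (2 * (real n + 1))^2) * (1 / (real n + 1))^2"
      using j unfolding N_def by (intro mult_right_mono mult_left_mono power_mono) auto
    also have "\<dots> = 64"
    proof -
      have p: "(real n + 1)^2 \<noteq> 0" by simp
      have e: "(2 * (real n + 1))^2 = 4 * (real n+1)^2" by (simp only: power_mult_distrib) simp
      have "(16 * (2 * (real n + 1))^2) * (1 / (real n + 1))^2 = 64 * ((real n + 1)^2 / (real n + 1)^2)"
        unfolding e by (simp add: power_divide)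
      then show ?thesis using p by simp
    qed
    finally show ?thesis .
  qed
  have "(\<Sum>j<N. \<Sum>w\<in>tree_edges b j. Iw b j (ut b n w)) \<le> (\<Sum>j<N. 64)" by (intro sum_mono gen) auto
  also have "\<dots> = 128 * (real n + 1)" unfolding N_def by simp
  finally show "tree_integral b (\<lambda>w s. (deriv (ut b n w) s)\<^sup>2 - lambda_b b * (ut b n w s)\<^sup>2) \<le> 128 * (real n + 1)"
    unfolding Qe .
qed

lemma necessity:
  fixes b :: nat and \<psi> :: "real \<Rightarrow> real"
  assumes b: "b \<ge> 2"
    and meas: "set_borel_measurable lborel {0..} \<psi>"
    and pos: "\<forall>t\<ge>0. \<psi> t \<ge> 0"
    and hyp: "\<exists>C::real. \<forall>u. tree_C0inf b u \<longrightarrow>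
            enn2ereal (tree_nn_integral b (\<lambda>w s. ennreal (\<psi> (real (length w) + s) * (u w s)\<^sup>2)))
              \<le> ereal (C * tree_integral b (\<lambda>w s. (deriv (u w) s)\<^sup>2 - lambda_b b * (u w s)\<^sup>2))"
  shows "(SUP r\<in>{0<..}. ennreal (1 / (1 + r)) *
                (\<integral>\<^sup>+ t\<in>{0..r}. ennreal (\<psi> t * (1 + t)\<^sup>2) \<partial>lborel)) < \<infinity>"
proof -
  obtain C where C: "\<And>u. tree_C0inf b u \<Longrightarrow>
            enn2ereal (tree_nn_integral b (\<lambda>w s. ennreal (\<psi> (real (length w) + s) * (u w s)\<^sup>2)))
              \<le> ereal (C * tree_integral b (\<lambda>w s. (deriv (u w) s)\<^sup>2 - lambda_b b * (u w s)\<^sup>2))"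
    using hyp by blast
  define I where "I r = (\<integral>\<^sup>+ t\<in>{0..r}. ennreal (\<psi> t * (1 + t)\<^sup>2) \<partial>lborel)" for r :: real
  define \<psi>0 where "\<psi>0 x = indicator {0..} x *\<^sub>R \<psi> x" for x :: real
  have m0: "\<psi>0 \<in> borel_measurable borel" using meas unfolding set_borel_measurable_def \<psi>0_def by simp
  have p0: "\<psi>0 x \<ge> 0" for x unfolding \<psi>0_def using pos by (auto simp: indicator_def)
  have e0: "\<psi>0 x = \<psi> x" if "x \<ge> 0" for x unfolding \<psi>0_def using that by simp
  define W where "W j = (\<integral>\<^sup>+s\<in>{0..1}. ennreal (\<psi>0 (real j + s)) \<partial>lborel)" for j :: nat
  define c where "c = (qq b)^2 * (sg b)^4"
  have cp: "c > 0" unfolding c_def using qq_pos[OF b] sg_bounds[OF b] by simp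
  define M where "M = (4 / c) * (128 * \<bar>C\<bar>)"
  have M0: "M \<ge> 0" unfolding M_def using cp by simp
  define L where "L n = tree_nn_integral b (\<lambda>w s. ennreal (\<psi> (real (length w) + s) * (ut b n w s)\<^sup>2))" for n
  have Lup: "L n \<le> ennreal (128 * \<bar>C\<bar> * (real n + 1))" for n
  proof -
    define Q where "Q = tree_integral b (\<lambda>w s. (deriv (ut b n w) s)\<^sup>2 - lambda_b b * (ut b n w s)\<^sup>2)"
    have Q: "Q \<le> 128 * (real n + 1)" "Q \<ge> 0" unfolding Q_def using ut_Q[OF b, of n] by auto
    have "C * Q \<le> \<bar>C\<bar> * Q" using Q by (intro mult_right_mono) auto
    also have "\<dots> \<le> \<bar>C\<bar> * (128 * (real n + 1))" using Q by (intro mult_left_mono) auto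
    also have "\<bar>C\<bar> * (128 * (real n + 1)) = 128 * \<bar>C\<bar> * (real n + 1)" by simp
    finally have CQ: "C * Q \<le> 128 * \<bar>C\<bar> * (real n + 1)" .
    have "enn2ereal (L n) \<le> ereal (C * Q)" unfolding L_def Q_def by (rule C[OF ut_C0inf[OF b]])
    also have "\<dots> \<le> ereal (128 * \<bar>C\<bar> * (real n + 1))" using CQ by simp
    also have "\<dots> = enn2ereal (ennreal (128 * \<bar>C\<bar> * (real n + 1)))" by simp
    finally show ?thesis by (simp add: less_eq_ennreal.rep_eq)
  qed
  have Llow: "(\<Sum>j<n. W j * ennreal (c * (real j + 1)^2)) \<le> L n" for n
  proof -
    define G where "G j = (\<Sum>w\<in>tree_edges b j. \<integral>\<^sup>+s\<in>{0..1}. ennreal (\<psi> (real (length w) + s) * (ut b n w s)\<^sup>2) \<partial>lborel)" for j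
    have gen: "W j * ennreal (c * (real j + 1)^2) \<le> G j" if j: "j < n" for j
    proof -
      have edge: "W j * ennreal ((mlow b j)^2) \<le> (\<integral>\<^sup>+s\<in>{0..1}. ennreal (\<psi> (real (length w) + s) * (ut b n w s)\<^sup>2) \<partial>lborel)"
        if w: "w \<in> tree_edges b j" for w
      proof -
        have lw: "length w = j" using w by (simp add: tree_edges_def)
        have "W j * ennreal ((mlow b j)^2) = (\<integral>\<^sup>+s. ennreal (\<psi>0 (real j + s)) * indicator {0..1} s * ennreal ((mlow b j)^2) \<partial>lborel)"
          unfolding W_def using m0 by (intro nn_integral_multc[symmetric]) auto
        also have "\<dots> \<le> (\<integral>\<^sup>+s\<in>{0..1}. ennreal (\<psi> (real (length w) + s) * (ut b n w s)\<^sup>2) \<partial>lborel)"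
        proof (intro nn_integral_mono)
          fix s :: real
          show "ennreal (\<psi>0 (real j + s)) * indicator {0..1} s * ennreal ((mlow b j)^2)
              \<le> ennreal (\<psi> (real (length w) + s) * (ut b n w s)\<^sup>2) * indicator {0..1} s"
          proof (cases "s \<in> {0..1}")
            case True
            have ut: "ut b n w s = phi b j s" unfolding ut_def lw using Vt_one[OF j] by simp
            have "(mlow b j)^2 \<le> (phi b j s)^2"
              using phi_lower[OF b, of s j] mlow_pos[OF b, of j] True unfolding mlow_def
              by (intro power_mono) auto
            then have "\<psi>0 (real j + s) * (mlow b j)^2 \<le> \<psi> (real j + s) * (phi b j s)^2"
              using e0[of "real j + s"] p0[of "real j + s"] True by (simp add: mult_left_mono)
            then have "ennreal (\<psi>0 (real j + s) * (mlow b j)^2) \<le> ennreal (\<psi> (real j + s) * (phi b j s)^2)"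
              by (rule ennreal_leI)
            then show ?thesis using True p0[of "real j + s"] unfolding ut lw
              by (simp add: ennreal_mult[symmetric])
          qed simp
        qed
        finally show ?thesis .
      qed
      have "W j * ennreal (c * (real j + 1)^2) \<le> W j * ennreal ((mlow b j)^2 * real b ^ j)"
        using mlow_sq[OF b, of j] unfolding c_def by (intro mult_left_mono) auto
      also have "\<dots> = (\<Sum>w\<in>tree_edges b j. W j * ennreal ((mlow b j)^2))"
        by (simp add: card_tree_edges ennreal_mult ennreal_of_nat_eq_real_of_nat mult.commute mult.left_commute)
      also have "\<dots> \<le> G j" unfolding G_def by (intro sum_mono edge)
      finally show ?thesis .
    qed
    have "(\<Sum>j<n. W j * ennreal (c * (real j + 1)^2)) \<le> (\<Sum>j<n. G j)" by (intro sum_mono gen) auto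
    also have "\<dots> \<le> (\<Sum>j. G j)" by (intro sum_le_suminf) auto
    also have "\<dots> = L n" unfolding L_def tree_nn_integral_def G_def ..
    finally show ?thesis .
  qed
  have In: "I (real n) \<le> ennreal (M * (real n + 1))" for n
  proof -
    have "I (real n) = (\<integral>\<^sup>+t\<in>{0..<real n}. ennreal (\<psi>0 t * (1 + t)^2) \<partial>lborel)"
      unfolding I_def
    proof (rule nn_integral_cong_AE)
      show "AE t in lborel. ennreal (\<psi> t * (1 + t)\<^sup>2) * indicator {0..real n} t = ennreal (\<psi>0 t * (1 + t)^2) * indicator {0..<real n} t"
        using AE_lborel_singleton[of "real n"] by eventually_elim (auto simp: indicator_def e0)
    qed
    also have "\<dots> = (\<Sum>j<n. \<integral>\<^sup>+t\<in>{real j..<real j + 1}. ennreal (\<psi>0 t * (1 + t)^2) \<partial>lborel)"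
      using m0 by (intro split_int[symmetric]) auto
    also have "\<dots> \<le> (\<Sum>j<n. W j * ennreal (4 * (real j + 1)^2))"
    proof (intro sum_mono)
      fix j assume j: "j \<in> {..<n}"
      have "(\<integral>\<^sup>+t\<in>{real j..<real j + 1}. ennreal (\<psi>0 t * (1 + t)^2) \<partial>lborel)
          \<le> (\<integral>\<^sup>+t. ennreal (\<psi>0 t) * indicator {real j..<real j + 1} t * ennreal (4 * (real j + 1)^2) \<partial>lborel)"
      proof (intro nn_integral_mono)
        fix t :: real
        show "ennreal (\<psi>0 t * (1 + t)^2) * indicator {real j..<real j + 1} t
            \<le> ennreal (\<psi>0 t) * indicator {real j..<real j + 1} t * ennreal (4 * (real j + 1)^2)"
        proof (cases "t \<in> {real j..<real j + 1}")
          case True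
          then have "(1 + t)^2 \<le> (2 * (real j + 1))^2" by (intro power_mono) auto
          moreover have "(2 * (real j + 1))^2 = 4 * (real j + 1)^2" by (simp only: power_mult_distrib) simp
          ultimately have "(1 + t)^2 \<le> 4 * (real j + 1)^2" by simp
          then have "\<psi>0 t * (1 + t)^2 \<le> \<psi>0 t * (4 * (real j + 1)^2)" using p0 by (intro mult_left_mono) auto
          then show ?thesis using True p0[of t] by (simp add: ennreal_mult[symmetric])
        qed simp
      qed
      also have "\<dots> = (\<integral>\<^sup>+t\<in>{real j..<real j + 1}. ennreal (\<psi>0 t) \<partial>lborel) * ennreal (4 * (real j + 1)^2)"
        using m0 by (intro nn_integral_multc) auto
      also have "\<dots> = W j * ennreal (4 * (real j + 1)^2)"
        unfolding W_def using m0 by (subst shift_int[where G = "\<lambda>t. ennreal (\<psi>0 t)"]) auto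
      finally show "(\<integral>\<^sup>+t\<in>{real j..<real j + 1}. ennreal (\<psi>0 t * (1 + t)^2) \<partial>lborel) \<le> W j * ennreal (4 * (real j + 1)^2)" .
    qed
    also have "\<dots> = ennreal (4 / c) * (\<Sum>j<n. W j * ennreal (c * (real j + 1)^2))"
    proof -
      have "ennreal (4 * (real j + 1)^2) = ennreal (4 / c) * ennreal (c * (real j + 1)^2)" for j
        using cp by (simp add: ennreal_mult[symmetric])
      then show ?thesis by (simp add: sum_distrib_left mult.commute mult.left_commute)
    qed
    also have "\<dots> \<le> ennreal (4 / c) * ennreal (128 * \<bar>C\<bar> * (real n + 1))"
      using Llow[of n] Lup[of n] by (intro mult_left_mono) auto
    also have "\<dots> = ennreal (M * (real n + 1))" unfolding M_def using cp
      by (simp add: ennreal_mult[symmetric])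
    finally show ?thesis .
  qed
  have "(SUP r\<in>{0<..}. ennreal (1 / (1 + r)) * I r) \<le> ennreal (2 * M)"
  proof (intro SUP_least)
    fix r :: real assume r: "r \<in> {0<..}"
    define n where "n = nat \<lceil>r\<rceil>"
    have rp: "r > 0" using r by simp
    have cr: "real_of_int \<lceil>r\<rceil> < r + 1" "r \<le> real_of_int \<lceil>r\<rceil>" by linarith+
    have "real n = real_of_int \<lceil>r\<rceil>" unfolding n_def using rp by simp
    then have rn: "r \<le> real n" "real n \<le> r + 1" using cr by linarith+
    have "I r \<le> I (real n)" unfolding I_def
      using rn by (intro nn_integral_mono) (auto simp: indicator_def)
    also have "\<dots> \<le> ennreal (M * (real n + 1))" by (rule In)
    also have "\<dots> \<le> ennreal (M * (2 * (1 + r)))" using rn M0 r by (intro ennreal_leI mult_left_mono) auto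
    finally have "ennreal (1 / (1 + r)) * I r \<le> ennreal (1 / (1 + r)) * ennreal (M * (2 * (1 + r)))"
      by (intro mult_left_mono) auto
    also have "\<dots> = ennreal (2 * M)"
    proof -
      have "ennreal (1 / (1 + r)) * ennreal (M * (2 * (1 + r))) = ennreal (1 / (1 + r) * (M * (2 * (1 + r))))"
        using rp M0 by (intro ennreal_mult[symmetric]) auto
      also have "1 / (1 + r) * (M * (2 * (1 + r))) = 2 * M" using rp by (simp add: field_simps)
      finally show ?thesis .
    qed
    finally show "ennreal (1 / (1 + r)) * I r \<le> ennreal (2 * M)" .
  qed
  also have "\<dots> < \<infinity>" by simp
  finally show ?thesis unfolding I_def .
qed

theorem theorem2p4:
  fixes b :: nat and \<psi> :: "real \<Rightarrow> real"
  assumes "b \<ge> 2"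
    and "set_borel_measurable lborel {0..} \<psi>"
    and "\<forall>t\<ge>0. \<psi> t \<ge> 0"
  shows "(\<exists>C::real. \<forall>u. tree_C0inf b u \<longrightarrow>
            enn2ereal (tree_nn_integral b (\<lambda>w s. ennreal (\<psi> (real (length w) + s) * (u w s)\<^sup>2)))
              \<le> ereal (C * tree_integral b (\<lambda>w s. (deriv (u w) s)\<^sup>2 - lambda_b b * (u w s)\<^sup>2)))
         \<longleftrightarrow> (SUP r\<in>{0<..}. ennreal (1 / (1 + r)) *
                (\<integral>\<^sup>+ t\<in>{0..r}. ennreal (\<psi> t * (1 + t)\<^sup>2) \<partial>lborel)) < \<infinity>"
  using necessity[OF assms] sufficiency[OF assms] by blast

end
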